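(* Let $A, B\in\mathbb{C}^{n\times n}$ and $D\in\mathbb{C}^{k\times k}$ be Hermitian with $B$ positive definite. Let $\lambda_1\le\lambda_2\le\cdots\le\lambda_n$ be the eigenvalues of the pencil $A-\lambda B$, with $U\in\mathbb{C}^{n\times n}$ such that $U^{\mathrm{H}}AU=\operatorname{diag}(\lambda_1,\ldots,\lambda_n)$ and $U^{\mathrm{H}}BU=I_n$. Let $Q\in\mathbb{C}^{k\times k}$ be unitary with $Q^{\mathrm{H}}DQ=\Omega=\operatorname{diag}(\omega_1,\ldots,\omega_k)$, where $\omega_1\ge\cdots\ge\omega_\ell\ge 0\ge\omega_{\ell+1}\ge\cdots\ge\omega_k$ for some $0\le \ell\le k$. Then $$\min_{X\in\mathbb{C}^{n\times k},\,X^{\mathrm{H}}BX=I_k}\operatorname{trace}(DX^{\mathrm{H}}AX)=\sum_{i=1}^{\ell}\omega_i\lambda_i+\sum_{i=\ell+1}^k\omega_i\lambda_{i+n-k}.$$ Furthermore, any minimizer $X_{\mathrm{opt}}$ satisfies: (a) If $D$ is nonsingular, then $\mathcal{R}(X_{\mathrm{opt}}Q)$ is the eigenspace of $A-\lambda B$ associated with its $\ell$ smallest and $k-\ell$ largest eigenvalues. If moreover all $\omega_i$ are distinct, then $(X_{\mathrm{opt}}Q)^{\mathrm{H}}AX_{\mathrm{opt}}Q=\operatorname{diag}(\lambda_1,\ldots,\lambda_\ell,\lambda_{n-k+\ell+1},\ldots,\lambda_n)$. (b) Suppose $D$ (possibly singular) has $\ell_+$ positive and $\ell_-$ negative eigenvalues,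 and let $\widehat Q\in\mathbb{C}^{k\times(\ell_++\ell_-)}$ consist of the first $\ell_+$ and last $\ell_-$ columns of $Q$. Then $\mathcal{R}(X_{\mathrm{opt}}\widehat Q)$ is the eigenspace of $A-\lambda B$ associated with its $\ell_+$ smallest and $\ell_-$ largest eigenvalues. If moreover the nonzero eigenvalues of $D$ are distinct, then $(X_{\mathrm{opt}}\widehat Q)^{\mathrm{H}}AX_{\mathrm{opt}}\widehat Q=\operatorname{diag}(\lambda_1,\ldots,\lambda_{\ell_+},\lambda_{n-\ell_-+1},\ldots,\lambda_n)$.
   Context: $X^{\mathrm{H}}$ denotes conjugate transpose, $\mathcal{R}(\cdot)$ the column space (range), and $k\le n$. "Eigenspace associated with a set of eigenvalues" means the subspace spanned by eigenvectors $u$ ($Au=\lambda Bu$) of the pencil corresponding to those eigenvalues. *)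

theory Defs
  imports "Jordan_Normal_Form.Schur_Decomposition"
begin

text \<open>Conjugate transpose is the library's mat_adjoint (dimensions swapped).\<close>

definition mtrace :: "complex mat \<Rightarrow> complex" where
  "mtrace M = (\<Sum>i<dim_row M. M $$ (i, i))"

definition hermitian_mat :: "nat \<Rightarrow> complex mat \<Rightarrow> bool" where
  "hermitian_mat n M \<longleftrightarrow> M \<in> carrier_mat n n \<and> mat_adjoint M = M"

definition pos_def_mat :: "nat \<Rightarrow> complex mat \<Rightarrow> bool" where
  "pos_def_mat n M \<longleftrightarrow> hermitian_mat n M \<and>
     (\<forall>x \<in> carrier_vec n. x \<noteq> 0\<^sub>v n \<longrightarrow>
        conjugate x \<bullet> (M *\<^sub>v x) \<in> \<real> \<and> Re (conjugate x \<bullet> (M *\<^sub>v x)) > 0)"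

definition unitary_mat :: "nat \<Rightarrow> complex mat \<Rightarrow> bool" where
  "unitary_mat k Q \<longleftrightarrow> Q \<in> carrier_mat k k \<and> mat_adjoint Q * Q = 1\<^sub>m k"

definition diagm :: "nat \<Rightarrow> (nat \<Rightarrow> real) \<Rightarrow> complex mat" where
  "diagm k f = mat k k (\<lambda>(i, j). if i = j then complex_of_real (f i) else 0)"

definition colspace :: "complex mat \<Rightarrow> complex vec set" where
  "colspace M = {M *\<^sub>v y | y. y \<in> carrier_vec (dim_col M)}"

text \<open>S is the eigenspace of the pencil A - lambda B (A, B of size n) associated
  with the eigenvalues mu 0, ..., mu (m-1) (counted with multiplicity): S is spanned by
  m (B-orthonormal, hence linearly independent) eigenvectors v_j with A v_j = mu_j B v_j.\<close>
definition pencil_eigenspace ::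
  "nat \<Rightarrow> complex mat \<Rightarrow> complex mat \<Rightarrow> nat \<Rightarrow> (nat \<Rightarrow> real) \<Rightarrow> complex vec set \<Rightarrow> bool" where
  "pencil_eigenspace n A B m mu S \<longleftrightarrow>
     (\<exists>V \<in> carrier_mat n m. mat_adjoint V * B * V = 1\<^sub>m m \<and>
        A * V = B * V * diagm m mu \<and> colspace V = S)"

definition first_last_cols :: "nat \<Rightarrow> nat \<Rightarrow> complex mat \<Rightarrow> complex mat" where
  "first_last_cols p q Q = mat (dim_row Q) (p + q)
     (\<lambda>(i, j). if j < p then Q $$ (i, j) else Q $$ (i, j + dim_col Q - (p + q)))"

end

theory Submission
  imports Defs
begin

type_synonym cmat = "complex mat"

lemma mult_idx:
  assumes "i < dim_row A" "j < dim_col B" "dim_col A = dim_row B"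
  shows "(A * B) $$ (i, j) = (\<Sum>m<dim_row B. A $$ (i, m) * B $$ (m, j))"
  using assms by (auto simp add: scalar_prod_def atLeast0LessThan intro!: sum.cong)

lemma adj_carrier[simp]: "mat_adjoint (M::cmat) \<in> carrier_mat (dim_col M) (dim_row M)"
  unfolding mat_adjoint_def by auto

lemma adj_dims[simp]: "dim_row (mat_adjoint (M::cmat)) = dim_col M" "dim_col (mat_adjoint M) = dim_row M"
  unfolding mat_adjoint_def by auto

lemma adj_idx[simp]:
  assumes "i < dim_col (M::cmat)" "j < dim_row M"
  shows "mat_adjoint M $$ (i, j) = cnj (M $$ (j, i))"
  using assms unfolding mat_adjoint_def by (simp add: mat_of_rows_def)

lemma adj_mult:
  assumes "(A::cmat) \<in> carrier_mat n m" "B \<in> carrier_mat m k"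
  shows "mat_adjoint (A * B) = mat_adjoint B * mat_adjoint A"
  apply (rule eq_matI)
  using assms by (auto simp: mult_idx mult.commute simp del: index_mult_mat(1))

lemma adj_adj[simp]: "mat_adjoint (mat_adjoint (M::cmat)) = M"
  by (rule eq_matI) auto

lemma adj_one[simp]: "mat_adjoint (1\<^sub>m n :: cmat) = 1\<^sub>m n"
  by (rule eq_matI) (auto simp: one_mat_def)

lemma mtrace_comm:
  assumes "(A::cmat) \<in> carrier_mat n m" "B \<in> carrier_mat m n"
  shows "mtrace (A * B) = mtrace (B * A)"
  using assms unfolding mtrace_def
  by (simp add: mult_idx sum.swap[of _ "{..<n}"] mult.commute del: index_mult_mat(1))

lemma abel_nonneg:
  fixes w x :: "nat \<Rightarrow> real"
  assumes "\<And>m. m < q \<Longrightarrow> 0 \<le> (\<Sum>j<Suc m. x j)"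
    and "\<And>i j. i \<le> j \<Longrightarrow> j < q \<Longrightarrow> w j \<le> w i"
    and "\<And>j. j < q \<Longrightarrow> 0 \<le> w j"
  shows "0 \<le> (\<Sum>j<q. w j * x j)"
  using assms
proof (induction q arbitrary: w)
  case 0
  then show ?case by simp
next
  case (Suc q)
  have id: "(\<Sum>j<Suc q. w j * x j) = (\<Sum>j<q. (w j - w q) * x j) + w q * (\<Sum>j<Suc q. x j)"
    by (simp add: algebra_simps sum.distrib sum_distrib_left sum_subtractf)
  have "0 \<le> (\<Sum>j<q. (w j - w q) * x j)"
    by (rule Suc.IH) (use Suc.prems in auto)
  moreover have "0 \<le> w q * (\<Sum>j<Suc q. x j)"
    using Suc.prems by auto
  ultimately show ?case unfolding id by linarith
qed

lemma abel_zero: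
  fixes w x :: "nat \<Rightarrow> real"
  assumes ps: "\<And>m. m < q \<Longrightarrow> 0 \<le> (\<Sum>j<Suc m. x j)"
    and dec: "\<And>i j. i \<le> j \<Longrightarrow> j < q \<Longrightarrow> w j \<le> w i"
    and nn: "\<And>j. j < q \<Longrightarrow> 0 \<le> w j"
    and m: "m < q" and gap: "(if Suc m < q then w (Suc m) else 0) < w m"
    and eq: "(\<Sum>j<q. w j * x j) = 0"
  shows "(\<Sum>j<Suc m. x j) = 0"
proof -
  define e where "e = w m - (if Suc m < q then w (Suc m) else 0)"
  define w' where "w' = (\<lambda>j. if j \<le> m then w j - e else w j)"
  have e: "0 < e" using gap e_def by simp
  have "0 \<le> (\<Sum>j<q. w' j * x j)"
  proof (rule abel_nonneg[OF ps])
    show "w' j \<le> w' i" if "i \<le> j" "j < q" for i j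
    proof (cases "j \<le> m")
      case True then show ?thesis using that dec unfolding w'_def by auto
    next
      case False
      then have "Suc m < q" "Suc m \<le> j" using that by auto
      then have wj: "w j \<le> w (Suc m)" using dec that by auto
      show ?thesis
      proof (cases "i \<le> m")
        case True
        then have "w m \<le> w i" using dec m by auto
        then show ?thesis using False True wj \<open>Suc m < q\<close> unfolding w'_def e_def by auto
      next
        case F2: False
        then show ?thesis using False dec that unfolding w'_def by auto
      qed
    qed
    show "0 \<le> w' j" if "j < q" for j
    proof (cases "j \<le> m")
      case True
      have "w m \<le> w j" using dec True m by auto
      moreover have "0 \<le> (if Suc m < q then w (Suc m) else 0)" using nn by auto
      ultimately show ?thesis using True unfolding w'_def e_def by auto
    next
      case False then show ?thesis using nn that unfolding w'_def by auto
    qed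
  qed (auto)
  moreover have "(\<Sum>j<q. w j * x j) = (\<Sum>j<q. w' j * x j) + e * (\<Sum>j<Suc m. x j)"
  proof -
    have "(\<Sum>j<q. w j * x j) = (\<Sum>j<q. w' j * x j + (if j \<le> m then e * x j else 0))"
      by (rule sum.cong) (auto simp: w'_def algebra_simps)
    also have "\<dots> = (\<Sum>j<q. w' j * x j) + (\<Sum>j<q. if j \<le> m then e * x j else 0)"
      by (simp add: sum.distrib)
    also have "(\<Sum>j<q. if j \<le> m then e * x j else 0) = (\<Sum>j\<in>{..<q} \<inter> {j. j \<le> m}. e * x j)"
      by (simp add: sum.inter_restrict)
    also have "{..<q} \<inter> {j. j \<le> m} = {..<Suc m}" using m by auto
    finally show ?thesis by (simp add: sum_distrib_left[symmetric] distrib_left)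
  qed
  ultimately have "e * (\<Sum>j<Suc m. x j) \<le> 0" using eq by linarith
  then have "(\<Sum>j<Suc m. x j) \<le> 0" using e by (simp add: mult_le_0_iff)
  with ps[OF m] show ?thesis by linarith
qed

lemma core_ineq:
  fixes lam w :: "nat \<Rightarrow> real"
  assumes sorted: "\<And>i j. i \<le> j \<Longrightarrow> j < n \<Longrightarrow> lam i \<le> lam j"
    and w01: "\<And>i. i < n \<Longrightarrow> 0 \<le> w i \<and> w i \<le> 1"
    and sw: "(\<Sum>i<n. w i) = real m" and mn: "m \<le> n"
  shows "(\<Sum>i<m. lam i) \<le> (\<Sum>i<n. lam i * w i)"
    and "(\<Sum>i<m. lam i) = (\<Sum>i<n. lam i * w i) \<Longrightarrow> 0 < m \<Longrightarrow> i < n \<Longrightarrow>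
          (lam i < lam (m - 1) \<longrightarrow> w i = 1) \<and> (lam (m - 1) < lam i \<longrightarrow> w i = 0)"
proof -
  define c where "c = (if m = 0 then lam 0 else lam (m - 1))"
  define g where "g = (\<lambda>i. (lam i - c) * (w i - (if i < m then 1 else 0)))"
  have g0: "0 \<le> g i" if "i < n" for i
  proof (cases "i < m")
    case True
    then have "m \<noteq> 0" by auto
    then have "lam i \<le> c" using sorted[of i "m - 1"] True mn unfolding c_def by auto
    moreover have "w i - 1 \<le> 0" using w01 that by auto
    ultimately show ?thesis using True unfolding g_def by (simp add: mult_nonpos_nonpos)
  next
    case False
    have "c \<le> lam i"
    proof (cases "m = 0")
      case True then show ?thesis using sorted[of 0 i] that unfolding c_def by auto
    next
      case F: False then show ?thesis using sorted[of "m - 1" i] that False unfolding c_def by auto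
    qed
    then show ?thesis using False w01[OF that] unfolding g_def by auto
  qed
  have ind: "(\<Sum>i<n. (if i < m then 1 else 0)) = real m"
  proof -
    have e: "{..<n} \<inter> {i. i < m} = {..<m}" using mn by auto
    show ?thesis using sum.inter_restrict[of "{..<n}" "\<lambda>_. 1::real" "{i. i<m}"] e
      by simp
  qed
  have lm: "(\<Sum>i<m. lam i) = (\<Sum>i<n. lam i * (if i < m then 1 else 0))"
  proof -
    have "(\<Sum>i<n. lam i * (if i < m then 1 else 0)) = (\<Sum>i\<in>{..<n} \<inter> {i. i < m}. lam i)"
      by (simp add: sum.inter_restrict if_distrib cong: if_cong)
    also have "{..<n} \<inter> {i. i < m} = {..<m}" using mn by auto
    finally show ?thesis by simp
  qed
  have key: "(\<Sum>i<n. lam i * w i) - (\<Sum>i<m. lam i) = (\<Sum>i<n. g i)"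
  proof -
    have "(\<Sum>i<n. g i) = (\<Sum>i<n. lam i * w i) - (\<Sum>i<n. lam i * (if i < m then 1 else 0))
        - c * ((\<Sum>i<n. w i) - (\<Sum>i<n. (if i < m then 1 else 0)))"
      unfolding g_def by (simp add: algebra_simps sum.distrib sum_subtractf sum_distrib_left)
    then show ?thesis using sw ind lm by simp
  qed
  have "0 \<le> (\<Sum>i<n. g i)" using g0 by (auto intro: sum_nonneg)
  then show "(\<Sum>i<m. lam i) \<le> (\<Sum>i<n. lam i * w i)" using key by linarith
  assume eq: "(\<Sum>i<m. lam i) = (\<Sum>i<n. lam i * w i)" and m0: "0 < m" and i: "i < n"
  have "(\<Sum>i<n. g i) = 0" using key eq by linarith
  then have gz: "g i = 0" using sum_nonneg_eq_0_iff[of "{..<n}" g] g0 i by auto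
  have c: "c = lam (m - 1)" using m0 c_def by auto
  show "(lam i < lam (m - 1) \<longrightarrow> w i = 1) \<and> (lam (m - 1) < lam i \<longrightarrow> w i = 0)"
  proof (intro conjI impI)
    assume a: "lam i < lam (m - 1)"
    moreover have "\<not> i < m \<Longrightarrow> m - 1 \<le> i" by arith
    ultimately have "i < m" using sorted[of "m - 1" i] i m0 by fastforce
    then show "w i = 1" using gz a c unfolding g_def by auto
  next
    assume a: "lam (m - 1) < lam i"
    moreover have "i < m \<Longrightarrow> i \<le> m - 1 \<and> m - 1 < n" using mn m0 by arith
    ultimately have "\<not> i < m" using sorted[of i "m - 1"] by fastforce
    then show "w i = 0" using gz a c unfolding g_def by auto
  qed
qed

lemma pos_block:
  fixes lam w :: "nat \<Rightarrow> real" and p :: "nat \<Rightarrow> nat \<Rightarrow> real"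
  assumes sorted: "\<And>i j. i \<le> j \<Longrightarrow> j < n \<Longrightarrow> lam i \<le> lam j"
    and qn: "q \<le> n"
    and pnn: "\<And>i j. i < n \<Longrightarrow> j < q \<Longrightarrow> 0 \<le> p i j"
    and cs: "\<And>j. j < q \<Longrightarrow> (\<Sum>i<n. p i j) = 1"
    and rs: "\<And>i. i < n \<Longrightarrow> (\<Sum>j<q. p i j) \<le> 1"
    and dec: "\<And>i j. i \<le> j \<Longrightarrow> j < q \<Longrightarrow> w j \<le> w i"
    and nn: "\<And>j. j < q \<Longrightarrow> 0 \<le> w j"
  shows pb1: "(\<Sum>j<q. w j * lam j) \<le> (\<Sum>j<q. w j * (\<Sum>i<n. lam i * p i j))"
    and pb2: "(\<Sum>j<q. w j * lam j) = (\<Sum>j<q. w j * (\<Sum>i<n. lam i * p i j)) \<Longrightarrow> 0 < q \<Longrightarrow>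
       0 < w (q - 1) \<Longrightarrow> i < n \<Longrightarrow>
       (lam i < lam (q - 1) \<longrightarrow> (\<Sum>j<q. p i j) = 1) \<and> (lam (q - 1) < lam i \<longrightarrow> (\<Sum>j<q. p i j) = 0)"
    and pb3: "(\<Sum>j<q. w j * lam j) = (\<Sum>j<q. w j * (\<Sum>i<n. lam i * p i j)) \<Longrightarrow>
       (\<And>i j. i < j \<Longrightarrow> j < q \<Longrightarrow> w j < w i) \<Longrightarrow> (\<And>j. j < q \<Longrightarrow> 0 < w j) \<Longrightarrow>
       i < n \<Longrightarrow> j < q \<Longrightarrow> lam i \<noteq> lam j \<Longrightarrow> p i j = 0"
proof -
  define c where "c = (\<lambda>j. (\<Sum>i<n. lam i * p i j))"
  define x where "x = (\<lambda>j. c j - lam j)"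
  define W where "W = (\<lambda>m i. (\<Sum>j<m. p i j))"
  have W01: "0 \<le> W m i \<and> W m i \<le> 1" if "m \<le> q" "i < n" for m i
  proof
    show "0 \<le> W m i" unfolding W_def using pnn that by (auto intro: sum_nonneg)
    have "W m i \<le> (\<Sum>j<q. p i j)" unfolding W_def
      by (rule sum_mono2) (use that pnn in auto)
    then show "W m i \<le> 1" using rs[OF that(2)] by linarith
  qed
  have Wsum: "(\<Sum>i<n. W m i) = real m" if "m \<le> q" for m
  proof -
    have "(\<Sum>i<n. W m i) = (\<Sum>j<m. \<Sum>i<n. p i j)" unfolding W_def by (rule sum.swap)
    also have "\<dots> = (\<Sum>j<m. 1)" using cs that by auto
    finally show ?thesis by simp
  qed
  have Wc: "(\<Sum>j<m. c j) = (\<Sum>i<n. lam i * W m i)" for m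
  proof -
    have "(\<Sum>j<m. c j) = (\<Sum>j<m. \<Sum>i<n. lam i * p i j)" by (simp add: c_def)
    also have "\<dots> = (\<Sum>i<n. \<Sum>j<m. lam i * p i j)" by (rule sum.swap)
    also have "\<dots> = (\<Sum>i<n. lam i * W m i)" by (simp add: W_def sum_distrib_left)
    finally show ?thesis .
  qed
  have core: "(\<Sum>i<m. lam i) \<le> (\<Sum>i<n. lam i * W m i)"
     "(\<Sum>i<m. lam i) = (\<Sum>i<n. lam i * W m i) \<Longrightarrow> 0 < m \<Longrightarrow> i < n \<Longrightarrow>
          (lam i < lam (m - 1) \<longrightarrow> W m i = 1) \<and> (lam (m - 1) < lam i \<longrightarrow> W m i = 0)"
    if "m \<le> q" for m i
  proof -
    have mn: "m \<le> n" using that qn by simp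
    have w01: "\<And>i. i < n \<Longrightarrow> 0 \<le> W m i \<and> W m i \<le> 1" using W01[OF that] by blast
    note ci = core_ineq[of n lam "W m" m, OF sorted w01 Wsum[OF that] mn]
    show "(\<Sum>i<m. lam i) \<le> (\<Sum>i<n. lam i * W m i)" by (rule ci(1))
    show "(\<Sum>i<m. lam i) = (\<Sum>i<n. lam i * W m i) \<Longrightarrow> 0 < m \<Longrightarrow> i < n \<Longrightarrow>
          (lam i < lam (m - 1) \<longrightarrow> W m i = 1) \<and> (lam (m - 1) < lam i \<longrightarrow> W m i = 0)"
      by (rule ci(2))
  qed
  have ps: "0 \<le> (\<Sum>j<Suc m. x j)" if "m < q" for m
  proof -
    have "(\<Sum>j<Suc m. x j) = (\<Sum>j<Suc m. c j) - (\<Sum>j<Suc m. lam j)"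
      unfolding x_def by (simp add: sum_subtractf)
    then show ?thesis using core(1)[of "Suc m"] Wc[of "Suc m"] that by simp
  qed
  have id: "(\<Sum>j<q. w j * x j) = (\<Sum>j<q. w j * c j) - (\<Sum>j<q. w j * lam j)"
    unfolding x_def by (simp add: algebra_simps sum_subtractf)
  have "0 \<le> (\<Sum>j<q. w j * x j)" by (rule abel_nonneg[OF ps dec nn])
  then show "(\<Sum>j<q. w j * lam j) \<le> (\<Sum>j<q. w j * (\<Sum>i<n. lam i * p i j))"
    using id unfolding c_def by simp
  {
    assume eq: "(\<Sum>j<q. w j * lam j) = (\<Sum>j<q. w j * (\<Sum>i<n. lam i * p i j))"
    then have x0: "(\<Sum>j<q. w j * x j) = 0" using id unfolding c_def by simp
    {
      assume q0: "0 < q" and wq: "0 < w (q - 1)" and i: "i < n"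
      have "(\<Sum>j<Suc (q - 1). x j) = 0"
        by (rule abel_zero[OF ps dec nn _ _ x0]) (use q0 wq in auto)
      then have "(\<Sum>j<q. x j) = 0" using q0 by simp
      then have "(\<Sum>j<q. c j) = (\<Sum>j<q. lam j)" unfolding x_def by (simp add: sum_subtractf)
      then have "(\<Sum>i<q. lam i) = (\<Sum>i<n. lam i * W q i)" using Wc by simp
      from core(2)[OF order_refl this q0 i]
      show "(lam i < lam (q - 1) \<longrightarrow> (\<Sum>j<q. p i j) = 1) \<and> (lam (q - 1) < lam i \<longrightarrow> (\<Sum>j<q. p i j) = 0)"
        unfolding W_def .
    }
    {
      assume sdec: "\<And>i j. i < j \<Longrightarrow> j < q \<Longrightarrow> w j < w i" and pos: "\<And>j. j < q \<Longrightarrow> 0 < w j"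
        and i: "i < n" and j: "j < q" and ne: "lam i \<noteq> lam j"
      have X0: "(\<Sum>j<Suc m. x j) = 0" if "m < q" for m
        by (rule abel_zero[OF ps dec nn that _ x0]) (use sdec pos that in auto)
      have xj: "x j = 0"
      proof (cases j)
        case 0 then show ?thesis using X0[of 0] j by simp
      next
        case (Suc j')
        then show ?thesis using X0[of j] X0[of j'] j by simp
      qed
      have "(\<Sum>j<Suc j. c j) = (\<Sum>j<Suc j. lam j)" using X0[OF j] unfolding x_def by (simp add: sum_subtractf del: sum.lessThan_Suc)
      then have "(\<Sum>i<Suc j. lam i) = (\<Sum>i<n. lam i * W (Suc j) i)" using Wc[of "Suc j"] by (simp del: sum.lessThan_Suc)
      from core(2)[OF _ this] j
      have big: "\<And>i. i < n \<Longrightarrow> lam j < lam i \<Longrightarrow> W (Suc j) i = 0" by auto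
      have pz: "p i' j = 0" if "i' < n" "lam j < lam i'" for i'
      proof -
        have "W (Suc j) i' = 0" using big that by auto
        then have "(\<Sum>j'<Suc j. p i' j') = 0" unfolding W_def .
        moreover have "\<forall>j'\<in>{..<Suc j}. 0 \<le> p i' j'" using pnn that j by auto
        ultimately show ?thesis using sum_nonneg_eq_0_iff[of "{..<Suc j}" "p i'"] by auto
      qed
      define g where "g = (\<lambda>i. (lam j - lam i) * p i j)"
      have g0: "0 \<le> g i'" if "i' < n" for i'
        using pz[OF that] pnn[OF that j] unfolding g_def
        by (cases "lam j < lam i'") auto
      have "(\<Sum>i<n. g i) = lam j * (\<Sum>i<n. p i j) - c j"
        unfolding g_def c_def by (simp add: algebra_simps sum_subtractf sum_distrib_left)
      also have "\<dots> = 0" using cs[OF j] xj unfolding x_def by simp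
      finally have "g i = 0" using sum_nonneg_eq_0_iff[of "{..<n}" g] g0 i by auto
      then show "p i j = 0" using ne pz[OF i] unfolding g_def by auto
    }
  }
qed

lemma neg_block:
  fixes lam w :: "nat \<Rightarrow> real" and p :: "nat \<Rightarrow> nat \<Rightarrow> real"
  assumes sorted: "\<And>i j. i \<le> j \<Longrightarrow> j < n \<Longrightarrow> lam i \<le> lam j"
    and qn: "q \<le> n"
    and pnn: "\<And>i j. i < n \<Longrightarrow> j < q \<Longrightarrow> 0 \<le> p i j"
    and cs: "\<And>j. j < q \<Longrightarrow> (\<Sum>i<n. p i j) = 1"
    and rs: "\<And>i. i < n \<Longrightarrow> (\<Sum>j<q. p i j) \<le> 1"
    and dec: "\<And>i j. i \<le> j \<Longrightarrow> j < q \<Longrightarrow> w j \<le> w i"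
    and np: "\<And>j. j < q \<Longrightarrow> w j \<le> 0"
  shows nb1: "(\<Sum>j<q. w j * lam (n - q + j)) \<le> (\<Sum>j<q. w j * (\<Sum>i<n. lam i * p i j))"
    and nb2: "(\<Sum>j<q. w j * lam (n - q + j)) = (\<Sum>j<q. w j * (\<Sum>i<n. lam i * p i j)) \<Longrightarrow> 0 < q \<Longrightarrow>
       w 0 < 0 \<Longrightarrow> i < n \<Longrightarrow>
       (lam (n - q) < lam i \<longrightarrow> (\<Sum>j<q. p i j) = 1) \<and> (lam i < lam (n - q) \<longrightarrow> (\<Sum>j<q. p i j) = 0)"
    and nb3: "(\<Sum>j<q. w j * lam (n - q + j)) = (\<Sum>j<q. w j * (\<Sum>i<n. lam i * p i j)) \<Longrightarrow>
       (\<And>i j. i < j \<Longrightarrow> j < q \<Longrightarrow> w j < w i) \<Longrightarrow> (\<And>j. j < q \<Longrightarrow> w j < 0) \<Longrightarrow>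
       i < n \<Longrightarrow> j < q \<Longrightarrow> lam i \<noteq> lam (n - q + j) \<Longrightarrow> p i j = 0"
proof -
  define lam' where "lam' = (\<lambda>i. - lam (n - Suc i))"
  define w' where "w' = (\<lambda>t. - w (q - Suc t))"
  define p' where "p' = (\<lambda>i t. p (n - Suc i) (q - Suc t))"
  have sorted0: "lam' i \<le> lam' j" if "i \<le> j" "j < n" for i j
    using sorted[of "n - Suc j" "n - Suc i"] that unfolding lam'_def by auto
  have sorted': "\<And>i j. i \<le> j \<Longrightarrow> j < n \<Longrightarrow> lam' i \<le> lam' j" using sorted0 by blast
  have pnn0: "0 \<le> p' i j" if "i < n" "j < q" for i j
    using pnn that unfolding p'_def by auto
  have pnn': "\<And>i j. i < n \<Longrightarrow> j < q \<Longrightarrow> 0 \<le> p' i j" using pnn0 by blast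
  have cs0: "(\<Sum>i<n. p' i j) = 1" if "j < q" for j
    unfolding p'_def using sum.nat_diff_reindex[of "\<lambda>i. p i (q - Suc j)" n] cs[of "q - Suc j"] that by simp
  have cs': "\<And>j. j < q \<Longrightarrow> (\<Sum>i<n. p' i j) = 1" using cs0 by blast
  have rs0: "(\<Sum>j<q. p' i j) \<le> 1" if "i < n" for i
    unfolding p'_def using sum.nat_diff_reindex[of "\<lambda>j. p (n - Suc i) j" q] rs[of "n - Suc i"] that by simp
  have rs': "\<And>i. i < n \<Longrightarrow> (\<Sum>j<q. p' i j) \<le> 1" using rs0 by blast
  have dec0: "w' j \<le> w' i" if "i \<le> j" "j < q" for i j
    using dec[of "q - Suc j" "q - Suc i"] that unfolding w'_def by auto
  have dec': "\<And>i j. i \<le> j \<Longrightarrow> j < q \<Longrightarrow> w' j \<le> w' i" using dec0 by blast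
  have nn0: "0 \<le> w' j" if "j < q" for j
    using np[of "q - Suc j"] that unfolding w'_def by auto
  have nn': "\<And>j. j < q \<Longrightarrow> 0 \<le> w' j" using nn0 by blast
  have L: "(\<Sum>j<q. w' j * lam' j) = (\<Sum>j<q. w j * lam (n - q + j))"
  proof -
    have "(\<Sum>j<q. w' j * lam' j) = (\<Sum>j<q. (\<lambda>j. w j * lam (n - q + j)) (q - Suc j))"
      by (rule sum.cong) (use qn in \<open>auto simp: w'_def lam'_def intro!: arg_cong[where f=lam]\<close>)
    also have "\<dots> = (\<Sum>j<q. w j * lam (n - q + j))" by (rule sum.nat_diff_reindex)
    finally show ?thesis .
  qed
  have cc: "(\<Sum>i<n. lam' i * p' i t) = - (\<Sum>i<n. lam i * p i (q - Suc t))" for t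
  proof -
    have "(\<Sum>i<n. lam' i * p' i t) = - (\<Sum>i<n. (\<lambda>i. lam i * p i (q - Suc t)) (n - Suc i))"
      by (simp add: lam'_def p'_def sum_negf)
    also have "\<dots> = - (\<Sum>i<n. lam i * p i (q - Suc t))" using sum.nat_diff_reindex[of "\<lambda>i. lam i * p i (q - Suc t)" n] by simp
    finally show ?thesis .
  qed
  have R: "(\<Sum>j<q. w' j * (\<Sum>i<n. lam' i * p' i j)) = (\<Sum>j<q. w j * (\<Sum>i<n. lam i * p i j))"
  proof -
    have "(\<Sum>j<q. w' j * (\<Sum>i<n. lam' i * p' i j)) = (\<Sum>j<q. (\<lambda>j. w j * (\<Sum>i<n. lam i * p i j)) (q - Suc j))"
      by (rule sum.cong) (auto simp: cc w'_def)
    also have "\<dots> = (\<Sum>j<q. w j * (\<Sum>i<n. lam i * p i j))" by (rule sum.nat_diff_reindex)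
    finally show ?thesis .
  qed
  note facts = sorted' qn pnn' cs' rs' dec' nn'
  note PB = pos_block[where lam=lam' and w=w' and p=p' and q=q and n=n]
  have P1: "(\<Sum>j<q. w' j * lam' j) \<le> (\<Sum>j<q. w' j * (\<Sum>i<n. lam' i * p' i j))"
    by (rule PB(1)) (use facts in auto)
  have P2: "(lam' i < lam' (q - 1) \<longrightarrow> (\<Sum>j<q. p' i j) = 1) \<and> (lam' (q - 1) < lam' i \<longrightarrow> (\<Sum>j<q. p' i j) = 0)"
    if "(\<Sum>j<q. w' j * lam' j) = (\<Sum>j<q. w' j * (\<Sum>i<n. lam' i * p' i j))" "0 < q" "0 < w' (q - 1)" "i < n" for i
    by (rule PB(2)) (use facts that in auto)
  have P3: "p' i j = 0"
    if "(\<Sum>j<q. w' j * lam' j) = (\<Sum>j<q. w' j * (\<Sum>i<n. lam' i * p' i j))" 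
      "\<And>i j. i < j \<Longrightarrow> j < q \<Longrightarrow> w' j < w' i" "\<And>j. j < q \<Longrightarrow> 0 < w' j"
      "i < n" "j < q" "lam' i \<noteq> lam' j" for i j
    by (rule PB(3)) (use facts that in auto)
  note P = P1 P2 P3
  note P = P[unfolded L R]
  show "(\<Sum>j<q. w j * lam (n - q + j)) \<le> (\<Sum>j<q. w j * (\<Sum>i<n. lam i * p i j))" by (rule P(1))
  {
    assume eq: "(\<Sum>j<q. w j * lam (n - q + j)) = (\<Sum>j<q. w j * (\<Sum>i<n. lam i * p i j))"
    {
      assume q0: "0 < q" and w0: "w 0 < 0" and i: "i < n"
      have "0 < w' (q - 1)" using w0 q0 unfolding w'_def by simp
      note P2 = P(2)[OF eq q0 this, of "n - Suc i"]
      have sp: "(\<Sum>j<q. p' (n - Suc i) j) = (\<Sum>j<q. p i j)"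
        unfolding p'_def using sum.nat_diff_reindex[of "\<lambda>j. p i j" q] i by simp
      have l1: "lam' (n - Suc i) = - lam i" "lam' (q - 1) = - lam (n - q)"
        unfolding lam'_def using i q0 qn by (auto intro!: arg_cong[where f=lam])
      show "(lam (n - q) < lam i \<longrightarrow> (\<Sum>j<q. p i j) = 1) \<and> (lam i < lam (n - q) \<longrightarrow> (\<Sum>j<q. p i j) = 0)"
        using P2 i unfolding sp l1 by auto
    }
    {
      assume sdec: "\<And>i j. i < j \<Longrightarrow> j < q \<Longrightarrow> w j < w i" and neg: "\<And>j. j < q \<Longrightarrow> w j < 0"
        and i: "i < n" and j: "j < q" and ne: "lam i \<noteq> lam (n - q + j)"
      have sdec': "w' b < w' a" if "a < b" "b < q" for a b
        using sdec[of "q - Suc b" "q - Suc a"] that unfolding w'_def by auto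
      have pos': "0 < w' b" if "b < q" for b
        using neg[of "q - Suc b"] that unfolding w'_def by auto
      have l1: "lam' (n - Suc i) = - lam i" "lam' (q - Suc j) = - lam (n - q + j)"
        unfolding lam'_def using i j qn by (auto intro!: arg_cong[where f=lam])
      have "p' (n - Suc i) (q - Suc j) = 0"
        by (rule P(3)[OF eq sdec' pos']) (use i j ne l1 in auto)
      then show "p i j = 0" unfolding p'_def using i j by simp
    }
  }
qed

lemma diagm_carrier[simp]: "diagm k f \<in> carrier_mat k k"
  unfolding diagm_def by auto

lemma diagm_idx[simp]: "i < k \<Longrightarrow> j < k \<Longrightarrow> diagm k f $$ (i, j) = (if i = j then complex_of_real (f i) else 0)"
  unfolding diagm_def by auto

lemma diagm_dims[simp]: "dim_row (diagm k f) = k" "dim_col (diagm k f) = k"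
  unfolding diagm_def by auto

lemma unitary_right:
  assumes "unitary_mat k Q"
  shows "Q * mat_adjoint Q = 1\<^sub>m k" "Q \<in> carrier_mat k k" "mat_adjoint Q * Q = 1\<^sub>m k"
proof -
  have Q: "Q \<in> carrier_mat k k" "mat_adjoint Q * Q = 1\<^sub>m k" using assms unfolding unitary_mat_def by auto
  have "mat_adjoint Q \<in> carrier_mat k k" using Q by (metis adj_carrier carrier_matD)
  from mat_mult_left_right_inverse[OF this Q(1) Q(2)] show "Q * mat_adjoint Q = 1\<^sub>m k" .
  show "Q \<in> carrier_mat k k" "mat_adjoint Q * Q = 1\<^sub>m k" using Q by auto
qed

lemma adj_carrier': "(M::cmat) \<in> carrier_mat a b \<Longrightarrow> mat_adjoint M \<in> carrier_mat b a"
  by (metis adj_carrier carrier_matD)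

lemma herm_carrier: "hermitian_mat n M \<Longrightarrow> M \<in> carrier_mat n n"
  unfolding hermitian_mat_def by auto
lemma herm_adj: "hermitian_mat n M \<Longrightarrow> mat_adjoint M = M"
  unfolding hermitian_mat_def by auto

context
  fixes n :: nat and A B U :: cmat and lam :: "nat \<Rightarrow> real"
  assumes A: "hermitian_mat n A" and B: "hermitian_mat n B" and U: "U \<in> carrier_mat n n"
    and UAU: "mat_adjoint U * A * U = diagm n lam" and UBU: "mat_adjoint U * B * U = 1\<^sub>m n"
begin

lemma Ac: "A \<in> carrier_mat n n" using A herm_carrier by auto
lemma Bc: "B \<in> carrier_mat n n" using B herm_carrier by auto
lemma Uadj: "mat_adjoint U \<in> carrier_mat n n" using U by (rule adj_carrier')

lemma UG: "U * (mat_adjoint U * B) = 1\<^sub>m n"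
proof -
  have "mat_adjoint U * B \<in> carrier_mat n n" by (rule mult_carrier_mat[OF Uadj Bc])
  from mat_mult_left_right_inverse[OF this U UBU] show ?thesis .
qed

lemma BUU: "B * (U * mat_adjoint U) = 1\<^sub>m n"
proof -
  have "mat_adjoint (U * (mat_adjoint U * B)) = 1\<^sub>m n" using UG by simp
  moreover have "mat_adjoint (U * (mat_adjoint U * B)) = mat_adjoint (mat_adjoint U * B) * mat_adjoint U"
    by (rule adj_mult[OF U mult_carrier_mat[OF Uadj Bc]])
  moreover have "mat_adjoint (mat_adjoint U * B) = mat_adjoint B * U"
    using adj_mult[OF Uadj Bc] by simp
  ultimately show ?thesis using herm_adj[OF B] U Bc Uadj by simp
qed

lemma AU: "A * U = B * (U * diagm n lam)"
proof -
  have UU: "U * mat_adjoint U \<in> carrier_mat n n" by (rule mult_carrier_mat[OF U Uadj])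
  have AU: "A * U \<in> carrier_mat n n" by (rule mult_carrier_mat[OF Ac U])
  have "A * U = (B * (U * mat_adjoint U)) * (A * U)" using BUU AU Ac by simp
  also have "\<dots> = B * ((U * mat_adjoint U) * (A * U))" by (rule assoc_mult_mat[OF Bc UU AU])
  also have "(U * mat_adjoint U) * (A * U) = U * (mat_adjoint U * (A * U))" by (rule assoc_mult_mat[OF U Uadj AU])
  also have "mat_adjoint U * (A * U) = mat_adjoint U * A * U" by (rule assoc_mult_mat[OF Uadj Ac U, symmetric])
  finally show ?thesis using UAU by simp
qed

lemma X_eq: "X \<in> carrier_mat n r \<Longrightarrow> U * (mat_adjoint U * B * X) = X"
proof -
  assume X: "X \<in> carrier_mat n r"
  have G: "mat_adjoint U * B \<in> carrier_mat n n" by (rule mult_carrier_mat[OF Uadj Bc])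
  have "U * (mat_adjoint U * B * X) = (U * (mat_adjoint U * B)) * X" by (rule assoc_mult_mat[OF U G X, symmetric])
  then show ?thesis using UG X by simp
qed

lemma adjUN_B: "N \<in> carrier_mat n r \<Longrightarrow> mat_adjoint (U * N) * B * (U * N) = mat_adjoint N * N"
proof -
  assume N: "N \<in> carrier_mat n r"
  have "mat_adjoint (U * N) = mat_adjoint N * mat_adjoint U" by (rule adj_mult[OF U N])
  moreover have "mat_adjoint N * mat_adjoint U * B * (U * N) = mat_adjoint N * (mat_adjoint U * B * U) * N"
  proof -
    have Na: "mat_adjoint N \<in> carrier_mat r n" by (rule adj_carrier'[OF N])
    have c1: "mat_adjoint U * B \<in> carrier_mat n n" by (rule mult_carrier_mat[OF Uadj Bc])
    have "mat_adjoint N * mat_adjoint U * B = mat_adjoint N * (mat_adjoint U * B)" by (rule assoc_mult_mat[OF Na Uadj Bc])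
    then have "mat_adjoint N * mat_adjoint U * B * (U * N) = mat_adjoint N * (mat_adjoint U * B) * (U * N)" by simp
    also have "\<dots> = mat_adjoint N * ((mat_adjoint U * B) * (U * N))" by (rule assoc_mult_mat[OF Na c1 mult_carrier_mat[OF U N]])
    also have "(mat_adjoint U * B) * (U * N) = (mat_adjoint U * B * U) * N" by (rule assoc_mult_mat[OF c1 U N, symmetric])
    also have "mat_adjoint N * ((mat_adjoint U * B * U) * N) = mat_adjoint N * (mat_adjoint U * B * U) * N"
      by (rule assoc_mult_mat[OF Na mult_carrier_mat[OF c1 U] N, symmetric])
    finally show ?thesis .
  qed
  ultimately have "mat_adjoint (U * N) * B * (U * N) = mat_adjoint N * (mat_adjoint U * B * U) * N"
    by simp
  then show ?thesis using UBU N by simp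
qed

lemma adjUN_A: "N \<in> carrier_mat n r \<Longrightarrow> mat_adjoint (U * N) * A * (U * N) = mat_adjoint N * diagm n lam * N"
proof -
  assume N: "N \<in> carrier_mat n r"
  have "mat_adjoint (U * N) = mat_adjoint N * mat_adjoint U" by (rule adj_mult[OF U N])
  moreover have "mat_adjoint N * mat_adjoint U * A * (U * N) = mat_adjoint N * (mat_adjoint U * A * U) * N"
  proof -
    have Na: "mat_adjoint N \<in> carrier_mat r n" by (rule adj_carrier'[OF N])
    have c1: "mat_adjoint U * A \<in> carrier_mat n n" by (rule mult_carrier_mat[OF Uadj Ac])
    have "mat_adjoint N * mat_adjoint U * A = mat_adjoint N * (mat_adjoint U * A)" by (rule assoc_mult_mat[OF Na Uadj Ac])
    then have "mat_adjoint N * mat_adjoint U * A * (U * N) = mat_adjoint N * (mat_adjoint U * A) * (U * N)" by simp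
    also have "\<dots> = mat_adjoint N * ((mat_adjoint U * A) * (U * N))" by (rule assoc_mult_mat[OF Na c1 mult_carrier_mat[OF U N]])
    also have "(mat_adjoint U * A) * (U * N) = (mat_adjoint U * A * U) * N" by (rule assoc_mult_mat[OF c1 U N, symmetric])
    also have "mat_adjoint N * ((mat_adjoint U * A * U) * N) = mat_adjoint N * (mat_adjoint U * A * U) * N"
      by (rule assoc_mult_mat[OF Na mult_carrier_mat[OF c1 U] N, symmetric])
    finally show ?thesis .
  qed
  ultimately have "mat_adjoint (U * N) * A * (U * N) = mat_adjoint N * (mat_adjoint U * A * U) * N"
    by simp
  then show ?thesis using UAU N by simp
qed

end

lemma diag_mult_idx:
  assumes "W \<in> carrier_mat n r" "i < n" "j < r"
  shows "(diagm n f * W) $$ (i, j) = complex_of_real (f i) * W $$ (i, j)"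
proof -
  have "(diagm n f * W) $$ (i, j) = (\<Sum>m<n. diagm n f $$ (i, m) * W $$ (m, j))"
    using assms by (subst mult_idx) auto
  also have "\<dots> = (\<Sum>m<n. if m = i then complex_of_real (f i) * W $$ (i, j) else 0)"
    by (rule sum.cong) (use assms in auto)
  finally show ?thesis using assms by simp
qed

lemma mult_diag_idx:
  assumes "W \<in> carrier_mat n r" "i < n" "j < r"
  shows "(W * diagm r f) $$ (i, j) = W $$ (i, j) * complex_of_real (f j)"
proof -
  have "(W * diagm r f) $$ (i, j) = (\<Sum>m<r. W $$ (i, m) * diagm r f $$ (m, j))"
    using assms by (subst mult_idx) auto
  also have "\<dots> = (\<Sum>m<r. if m = j then W $$ (i, j) * complex_of_real (f j) else 0)"
    by (rule sum.cong) (use assms in auto)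
  finally show ?thesis using assms by simp
qed

lemma adjLam_idx:
  assumes Z: "Z \<in> carrier_mat n r" and W: "W \<in> carrier_mat n s" and a: "a < r" and b: "b < s"
  shows "(mat_adjoint Z * diagm n f * W) $$ (a, b) = (\<Sum>i<n. cnj (Z $$ (i, a)) * complex_of_real (f i) * W $$ (i, b))"
proof -
  have Za: "mat_adjoint Z \<in> carrier_mat r n" by (rule adj_carrier'[OF Z])
  have "mat_adjoint Z * diagm n f * W = mat_adjoint Z * (diagm n f * W)"
    by (rule assoc_mult_mat[OF Za diagm_carrier W])
  moreover have "(mat_adjoint Z * (diagm n f * W)) $$ (a, b) = (\<Sum>i<n. mat_adjoint Z $$ (a, i) * (diagm n f * W) $$ (i, b))"
    using Za W a b by (subst mult_idx) auto
  moreover have "\<dots> = (\<Sum>i<n. cnj (Z $$ (i, a)) * complex_of_real (f i) * W $$ (i, b))"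
    by (rule sum.cong) (use Z W a b in \<open>auto simp: diag_mult_idx simp del: index_mult_mat(1)\<close>)
  ultimately show ?thesis by simp
qed

lemma cnj_mult_self: "cnj z * z = complex_of_real ((cmod z)\<^sup>2)"
  by (metis complex_norm_square mult.commute)

lemma trace_formula:
  assumes D: "D \<in> carrier_mat k k" and Q: "unitary_mat k Q"
    and QDQ: "mat_adjoint Q * D * Q = diagm k w" and Z: "Z \<in> carrier_mat n k"
  shows "mtrace (D * (mat_adjoint (Z * mat_adjoint Q) * diagm n lam * (Z * mat_adjoint Q)))
     = complex_of_real (\<Sum>j<k. w j * (\<Sum>i<n. lam i * (cmod (Z $$ (i, j)))\<^sup>2))"
proof -
  note QQ = unitary_right[OF Q]
  have Qc: "Q \<in> carrier_mat k k" using QQ by simp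
  have Qa: "mat_adjoint Q \<in> carrier_mat k k" using adj_carrier'[OF Qc] .
  have Za: "mat_adjoint Z \<in> carrier_mat k n" using adj_carrier'[OF Z] .
  have L: "diagm n lam \<in> carrier_mat n n" by simp
  define T where "T = mat_adjoint Z * diagm n lam * Z"
  have ZL: "mat_adjoint Z * diagm n lam \<in> carrier_mat k n" using mult_carrier_mat[OF Za L] .
  have T: "T \<in> carrier_mat k k" unfolding T_def using mult_carrier_mat[OF ZL Z] .
  have adjN: "mat_adjoint (Z * mat_adjoint Q) = Q * mat_adjoint Z"
    using adj_mult[OF Z Qa] by simp
  have QZ: "Q * mat_adjoint Z \<in> carrier_mat k n" using mult_carrier_mat[OF Qc Za] .
  have ZQ: "Z * mat_adjoint Q \<in> carrier_mat n k" using mult_carrier_mat[OF Z Qa] .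
  have e1: "(Q * mat_adjoint Z) * diagm n lam * (Z * mat_adjoint Q) = Q * (T * mat_adjoint Q)"
  proof -
    have "(Q * mat_adjoint Z) * diagm n lam = Q * (mat_adjoint Z * diagm n lam)"
      by (rule assoc_mult_mat[OF Qc Za L])
    moreover have "Q * (mat_adjoint Z * diagm n lam) * (Z * mat_adjoint Q) = Q * ((mat_adjoint Z * diagm n lam) * (Z * mat_adjoint Q))"
      by (rule assoc_mult_mat[OF Qc ZL ZQ])
    moreover have "(mat_adjoint Z * diagm n lam) * (Z * mat_adjoint Q) = T * mat_adjoint Q"
      unfolding T_def by (rule assoc_mult_mat[OF ZL Z Qa, symmetric])
    ultimately show ?thesis by simp
  qed
  have TQ: "T * mat_adjoint Q \<in> carrier_mat k k" using mult_carrier_mat[OF T Qa] .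
  have DQ: "D * Q \<in> carrier_mat k k" using mult_carrier_mat[OF D Qc] .
  have DQT: "D * Q * T \<in> carrier_mat k k" using mult_carrier_mat[OF DQ T] .
  have e2: "D * (Q * (T * mat_adjoint Q)) = (D * Q * T) * mat_adjoint Q"
  proof -
    have "D * (Q * (T * mat_adjoint Q)) = (D * Q) * (T * mat_adjoint Q)"
      by (rule assoc_mult_mat[OF D Qc TQ, symmetric])
    also have "\<dots> = (D * Q * T) * mat_adjoint Q" by (rule assoc_mult_mat[OF DQ T Qa, symmetric])
    finally show ?thesis .
  qed
  have e3: "mat_adjoint Q * (D * Q * T) = diagm k w * T"
  proof -
    have "mat_adjoint Q * (D * Q * T) = mat_adjoint Q * (D * Q) * T" by (rule assoc_mult_mat[OF Qa DQ T, symmetric])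
    also have "mat_adjoint Q * (D * Q) = mat_adjoint Q * D * Q" by (rule assoc_mult_mat[OF Qa D Qc, symmetric])
    finally show ?thesis using QDQ by simp
  qed
  have "mtrace (D * (mat_adjoint (Z * mat_adjoint Q) * diagm n lam * (Z * mat_adjoint Q)))
      = mtrace ((D * Q * T) * mat_adjoint Q)" unfolding adjN e1 e2 ..
  also have "\<dots> = mtrace (mat_adjoint Q * (D * Q * T))" by (rule mtrace_comm[OF DQT Qa])
  also have "\<dots> = mtrace (diagm k w * T)" unfolding e3 ..
  also have "\<dots> = (\<Sum>j<k. complex_of_real (w j) * T $$ (j, j))"
    unfolding mtrace_def using T by (auto intro!: sum.cong simp: diag_mult_idx simp del: index_mult_mat(1))
  also have "\<dots> = (\<Sum>j<k. complex_of_real (w j * (\<Sum>i<n. lam i * (cmod (Z $$ (i, j)))\<^sup>2)))"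
  proof (rule sum.cong[OF refl])
    fix j assume j: "j \<in> {..<k}"
    have "T $$ (j, j) = (\<Sum>i<n. cnj (Z $$ (i, j)) * complex_of_real (lam i) * Z $$ (i, j))"
      unfolding T_def using adjLam_idx[OF Z Z] j by auto
    also have "\<dots> = (\<Sum>i<n. complex_of_real (lam i * (cmod (Z $$ (i, j)))\<^sup>2))"
    proof (rule sum.cong[OF refl])
      fix i
      have "cnj (Z $$ (i, j)) * complex_of_real (lam i) * Z $$ (i, j) = complex_of_real (lam i) * (cnj (Z $$ (i, j)) * Z $$ (i, j))"
        by (simp add: algebra_simps)
      also have "\<dots> = complex_of_real (lam i * (cmod (Z $$ (i, j)))\<^sup>2)"
        unfolding cnj_mult_self by (simp only: of_real_mult)
      finally show "cnj (Z $$ (i, j)) * complex_of_real (lam i) * Z $$ (i, j) = complex_of_real (lam i * (cmod (Z $$ (i, j)))\<^sup>2)" .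
    qed
    also have "\<dots> = complex_of_real (\<Sum>i<n. lam i * (cmod (Z $$ (i, j)))\<^sup>2)" by simp
    finally show "complex_of_real (w j) * T $$ (j, j) = complex_of_real (w j * (\<Sum>i<n. lam i * (cmod (Z $$ (i, j)))\<^sup>2))"
      by simp
  qed
  also have "\<dots> = complex_of_real (\<Sum>j<k. w j * (\<Sum>i<n. lam i * (cmod (Z $$ (i, j)))\<^sup>2))" by simp
  finally show ?thesis .
qed

lemma orth_inner:
  fixes Z :: cmat
  assumes Z: "Z \<in> carrier_mat n p" and ZZ: "mat_adjoint Z * Z = 1\<^sub>m p" and a: "a < p" and b: "b < p"
  shows "(\<Sum>i<n. cnj (Z $$ (i, a)) * Z $$ (i, b)) = (if a = b then 1 else 0)"
proof -
  have "(mat_adjoint Z * Z) $$ (a, b) = (\<Sum>i<n. mat_adjoint Z $$ (a, i) * Z $$ (i, b))"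
    using Z a b by (subst mult_idx) auto
  also have "\<dots> = (\<Sum>i<n. cnj (Z $$ (i, a)) * Z $$ (i, b))"
    by (rule sum.cong) (use Z a in auto)
  finally show ?thesis using ZZ a b by simp
qed

lemma orth_col:
  fixes Z :: cmat
  assumes Z: "Z \<in> carrier_mat n p" and ZZ: "mat_adjoint Z * Z = 1\<^sub>m p" and j: "j < p"
  shows "(\<Sum>i<n. (cmod (Z $$ (i, j)))\<^sup>2) = 1"
proof -
  have "complex_of_real (\<Sum>i<n. (cmod (Z $$ (i, j)))\<^sup>2) = (\<Sum>i<n. cnj (Z $$ (i, j)) * Z $$ (i, j))"
    by (simp add: cnj_mult_self)
  also have "\<dots> = 1" using orth_inner[OF Z ZZ j j] by simp
  finally show ?thesis by (metis of_real_eq_1_iff)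
qed

lemma proj_props:
  fixes Z :: cmat
  assumes Z: "Z \<in> carrier_mat n p" and ZZ: "mat_adjoint Z * Z = 1\<^sub>m p"
  shows "Z * mat_adjoint Z \<in> carrier_mat n n"
    and "mat_adjoint (Z * mat_adjoint Z) = Z * mat_adjoint Z"
    and "(Z * mat_adjoint Z) * (Z * mat_adjoint Z) = Z * mat_adjoint Z"
    and "(Z * mat_adjoint Z) * Z = Z"
proof -
  have Za: "mat_adjoint Z \<in> carrier_mat p n" by (rule adj_carrier'[OF Z])
  show "Z * mat_adjoint Z \<in> carrier_mat n n" using mult_carrier_mat[OF Z Za] .
  show "mat_adjoint (Z * mat_adjoint Z) = Z * mat_adjoint Z" using adj_mult[OF Z Za] by simp
  have ZZZ: "(Z * mat_adjoint Z) * Z = Z"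
  proof -
    have "(Z * mat_adjoint Z) * Z = Z * (mat_adjoint Z * Z)" by (rule assoc_mult_mat[OF Z Za Z])
    then show ?thesis using ZZ Z by simp
  qed
  show "(Z * mat_adjoint Z) * Z = Z" by (rule ZZZ)
  have "(Z * mat_adjoint Z) * (Z * mat_adjoint Z) = ((Z * mat_adjoint Z) * Z) * mat_adjoint Z"
    by (rule assoc_mult_mat[OF mult_carrier_mat[OF Z Za] Z Za, symmetric])
  then show "(Z * mat_adjoint Z) * (Z * mat_adjoint Z) = Z * mat_adjoint Z" using ZZZ by simp
qed

lemma bessel:
  fixes Z :: cmat
  assumes Z: "Z \<in> carrier_mat n p" and ZZ: "mat_adjoint Z * Z = 1\<^sub>m p" and i: "i < n"
  shows "(\<Sum>j<p. (cmod (Z $$ (i, j)))\<^sup>2) \<le> 1"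
    and "(\<Sum>j<p. (cmod (Z $$ (i, j)))\<^sup>2) = 1 \<Longrightarrow> m < n \<Longrightarrow> (Z * mat_adjoint Z) $$ (m, i) = (if m = i then 1 else 0)"
proof -
  define P where "P = Z * mat_adjoint Z"
  note PP = proj_props[OF Z ZZ, folded P_def]
  define s where "s = (\<Sum>j<p. (cmod (Z $$ (i, j)))\<^sup>2)"
  have Pidx: "P $$ (a, b) = (\<Sum>j<p. Z $$ (a, j) * cnj (Z $$ (b, j)))" if "a < n" "b < n" for a b
    unfolding P_def using Z that by (subst mult_idx) auto
  have Ph: "P $$ (a, b) = cnj (P $$ (b, a))" if "a < n" "b < n" for a b
  proof -
    have "P $$ (a, b) = mat_adjoint P $$ (a, b)" using PP(2) by simp
    also have "\<dots> = cnj (P $$ (b, a))" using PP(1) that by simp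
    finally show ?thesis .
  qed
  have Pii: "P $$ (i, i) = complex_of_real s"
  proof -
    have "P $$ (i, i) = (\<Sum>j<p. complex_of_real ((cmod (Z $$ (i, j)))\<^sup>2))"
      unfolding Pidx[OF i i]
    proof (rule sum.cong[OF refl])
      fix j
      show "Z $$ (i, j) * cnj (Z $$ (i, j)) = complex_of_real ((cmod (Z $$ (i, j)))\<^sup>2)"
        using cnj_mult_self[of "Z $$ (i, j)"] by (simp only: mult.commute)
    qed
    then show ?thesis unfolding s_def by simp
  qed
  have sq: "(\<Sum>m<n. P $$ (i, m) * P $$ (m, i)) = P $$ (i, i)"
  proof -
    have "(P * P) $$ (i, i) = (\<Sum>m<n. P $$ (i, m) * P $$ (m, i))"
      using PP(1) i by (subst mult_idx) auto
    then show ?thesis using PP(3) by simp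
  qed
  define v where "v = (\<lambda>m. (if m = i then 1 else 0) - P $$ (m, i))"
  have pt: "cnj (v m) * v m = (if m = i then 1 - P $$ (i, i) - cnj (P $$ (i, i)) else 0) + P $$ (i, m) * P $$ (m, i)"
    if "m < n" for m
  proof (cases "m = i")
    case True
    have "cnj (P $$ (i, i)) = P $$ (i, i)" using Ph[OF i i] by simp
    then show ?thesis using True unfolding v_def by (simp add: algebra_simps)
  next
    case False
    then show ?thesis using Ph[OF i that] unfolding v_def by simp
  qed
  have "(\<Sum>m<n. cnj (v m) * v m) = (\<Sum>m<n. (if m = i then 1 - P $$ (i, i) - cnj (P $$ (i, i)) else 0)) + (\<Sum>m<n. P $$ (i, m) * P $$ (m, i))"
    by (simp add: pt sum.distrib)
  also have "\<dots> = 1 - complex_of_real s" using sq i Pii by simp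
  finally have "complex_of_real (\<Sum>m<n. (cmod (v m))\<^sup>2) = complex_of_real (1 - s)"
    by (simp add: cnj_mult_self)
  then have vs: "(\<Sum>m<n. (cmod (v m))\<^sup>2) = 1 - s" using of_real_eq_iff by blast
  have "0 \<le> (\<Sum>m<n. (cmod (v m))\<^sup>2)" by (auto intro: sum_nonneg)
  then show "s \<le> 1" using vs by linarith
  assume s1: "s = 1" and m: "m < n"
  have "(\<Sum>m<n. (cmod (v m))\<^sup>2) = 0" using vs s1 by simp
  then have "(cmod (v m))\<^sup>2 = 0" using sum_nonneg_eq_0_iff[of "{..<n}" "\<lambda>m. (cmod (v m))\<^sup>2"] m by auto
  then have "v m = 0" by simp
  then show "P $$ (m, i) = (if m = i then 1 else 0)" unfolding v_def by (auto split: if_splits)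
qed

lemma fill:
  fixes P f :: "nat \<Rightarrow> nat \<Rightarrow> complex" and C :: "nat set" and inC :: "nat \<Rightarrow> bool"
  assumes Ph: "\<And>a b. a < n \<Longrightarrow> b < n \<Longrightarrow> P a b = cnj (P b a)"
    and PP: "\<And>a b. a < n \<Longrightarrow> b < n \<Longrightarrow> (\<Sum>m<n. P a m * P m b) = P a b"
    and FF: "\<And>j j'. j < r \<Longrightarrow> j' < r \<Longrightarrow> (\<Sum>m<n. cnj (f m j) * f m j') = (if j = j' then 1 else 0)"
    and PF: "\<And>a j. a < n \<Longrightarrow> j < r \<Longrightarrow> (\<Sum>m<n. P a m * f m j) = f a j"
    and C: "C \<subseteq> {..<n}"
    and pres: "\<And>i j. i < n \<Longrightarrow> j \<in> C \<Longrightarrow> i \<notin> C \<Longrightarrow> P i j = 0"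
    and supp: "\<And>i j. i < n \<Longrightarrow> j < r \<Longrightarrow> (inC j \<and> i \<notin> C \<or> \<not> inC j \<and> i \<in> C) \<Longrightarrow> f i j = 0"
    and cnt: "real (card {j. j < r \<and> inC j}) < (\<Sum>i\<in>C. Re (P i i))"
  shows "\<exists>v. (\<Sum>m<n. cnj (v m) * v m) = 1 \<and> (\<forall>j<r. (\<Sum>m<n. cnj (f m j) * v m) = 0)
           \<and> (\<forall>a<n. (\<Sum>m<n. P a m * v m) = v a) \<and> (\<forall>i<n. i \<notin> C \<longrightarrow> v i = 0)"
proof -
  have finC: "finite C" using C finite_subset by blast
  define d where "d = (\<lambda>i. Re (P i i) - (\<Sum>j<r. (cmod (f i j))\<^sup>2))"
  have colC: "(\<Sum>i\<in>C. (cmod (f i j))\<^sup>2) = (if inC j then 1 else 0)" if j: "j < r" for j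
  proof (cases "inC j")
    case True
    have "(\<Sum>i\<in>C. (cmod (f i j))\<^sup>2) = (\<Sum>i<n. (cmod (f i j))\<^sup>2)"
      by (rule sum.mono_neutral_left) (use C supp j True in auto)
    also have "complex_of_real \<dots> = (\<Sum>m<n. cnj (f m j) * f m j)" by (simp add: cnj_mult_self)
    also have "\<dots> = 1" using FF[OF j j] by simp
    finally have "(\<Sum>i<n. (cmod (f i j))\<^sup>2) = 1"
      by (metis \<open>(\<Sum>i\<in>C. (cmod (f i j))\<^sup>2) = (\<Sum>i<n. (cmod (f i j))\<^sup>2)\<close> of_real_eq_1_iff)
    then show ?thesis using True \<open>(\<Sum>i\<in>C. (cmod (f i j))\<^sup>2) = (\<Sum>i<n. (cmod (f i j))\<^sup>2)\<close> by simp
  next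
    case False
    have "(\<Sum>i\<in>C. (cmod (f i j))\<^sup>2) = 0"
      by (rule sum.neutral) (use C supp j False in auto)
    then show ?thesis using False by simp
  qed
  have "(\<Sum>i\<in>C. d i) = (\<Sum>i\<in>C. Re (P i i)) - (\<Sum>j<r. \<Sum>i\<in>C. (cmod (f i j))\<^sup>2)"
    unfolding d_def by (simp add: sum_subtractf sum.swap[of _ C])
  also have "(\<Sum>j<r. \<Sum>i\<in>C. (cmod (f i j))\<^sup>2) = (\<Sum>j<r. if inC j then 1 else 0)"
    by (rule sum.cong) (auto simp: colC)
  also have "\<dots> = real (card {j. j < r \<and> inC j})"
  proof -
    have "(\<Sum>j<r. if inC j then 1 else (0::real)) = (\<Sum>j\<in>{..<r} \<inter> {j. inC j}. 1)"
      using sum.inter_restrict[of "{..<r}" "\<lambda>_. 1::real" "{j. inC j}"] by simp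
    also have "{..<r} \<inter> {j. inC j} = {j. j < r \<and> inC j}" by auto
    finally show ?thesis by simp
  qed
  finally have "0 < (\<Sum>i\<in>C. d i)" using cnt by linarith
  then obtain i0 where i0C: "i0 \<in> C" and di0: "0 < d i0"
    by (metis not_le sum_nonpos)
  have i0: "i0 < n" using i0C C by auto
  define u where "u = (\<lambda>m. P m i0 - (\<Sum>j<r. f m j * cnj (f i0 j)))"
  have orth_u: "(\<Sum>m<n. cnj (f m j) * u m) = 0" if j: "j < r" for j
  proof -
    have a: "(\<Sum>m<n. cnj (f m j) * P m i0) = cnj (f i0 j)"
    proof -
      have "(\<Sum>m<n. cnj (f m j) * P m i0) = cnj (\<Sum>m<n. P i0 m * f m j)"
        by (simp add: Ph[OF _ i0] mult.commute)
      then show ?thesis using PF[OF i0 j] by simp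
    qed
    have b: "(\<Sum>m<n. cnj (f m j) * (\<Sum>j'<r. f m j' * cnj (f i0 j'))) = cnj (f i0 j)"
    proof -
      have "(\<Sum>m<n. cnj (f m j) * (\<Sum>j'<r. f m j' * cnj (f i0 j')))
          = (\<Sum>m<n. \<Sum>j'<r. cnj (f m j) * f m j' * cnj (f i0 j'))"
        by (simp add: sum_distrib_left mult.assoc)
      also have "\<dots> = (\<Sum>j'<r. \<Sum>m<n. cnj (f m j) * f m j' * cnj (f i0 j'))" by (rule sum.swap)
      also have "\<dots> = (\<Sum>j'<r. (if j = j' then 1 else 0) * cnj (f i0 j'))"
        by (rule sum.cong[OF refl]) (simp add: sum_distrib_right[symmetric] FF[OF j])
      also have "\<dots> = (\<Sum>j'<r. if j = j' then cnj (f i0 j') else 0)"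
        by (rule sum.cong) auto
      also have "\<dots> = cnj (f i0 j)" using j by simp
      finally show ?thesis .
    qed
    show ?thesis unfolding u_def using a b by (simp add: right_diff_distrib sum_subtractf)
  qed
  have rng_u: "(\<Sum>m<n. P a m * u m) = u a" if a: "a < n" for a
  proof -
    have "(\<Sum>m<n. P a m * (\<Sum>j<r. f m j * cnj (f i0 j))) = (\<Sum>m<n. \<Sum>j<r. P a m * f m j * cnj (f i0 j))"
      by (simp add: sum_distrib_left mult.assoc)
    also have "\<dots> = (\<Sum>j<r. \<Sum>m<n. P a m * f m j * cnj (f i0 j))" by (rule sum.swap)
    also have "\<dots> = (\<Sum>j<r. f a j * cnj (f i0 j))"
      by (rule sum.cong[OF refl]) (simp add: sum_distrib_right[symmetric] PF[OF a])
    finally show ?thesis unfolding u_def using PP[OF a i0] by (simp add: right_diff_distrib sum_subtractf)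
  qed
  have ui0: "u i0 = complex_of_real (d i0)"
  proof -
    have "P i0 i0 = cnj (P i0 i0)" using Ph[OF i0 i0] .
    then have "Im (P i0 i0) = 0" by (metis cnj.simps(2) neg_equal_zero complex_cnj_cancel_iff)
    then have p: "P i0 i0 = complex_of_real (Re (P i0 i0))" by (simp add: complex_eq_iff)
    have "(\<Sum>j<r. f i0 j * cnj (f i0 j)) = complex_of_real (\<Sum>j<r. (cmod (f i0 j))\<^sup>2)"
    proof -
      have "(\<Sum>j<r. f i0 j * cnj (f i0 j)) = (\<Sum>j<r. complex_of_real ((cmod (f i0 j))\<^sup>2))"
        by (rule sum.cong[OF refl]) (metis cnj_mult_self mult.commute)
      also have "\<dots> = complex_of_real (\<Sum>j<r. (cmod (f i0 j))\<^sup>2)" by (simp only: of_real_sum)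
      finally show ?thesis .
    qed
    then show ?thesis unfolding u_def d_def using p by simp
  qed
  have norm_u: "(\<Sum>m<n. cnj (u m) * u m) = complex_of_real (d i0)"
  proof -
    have e1: "(\<Sum>m<n. cnj (u m) * P m i0) = cnj (u i0)"
    proof -
      have "(\<Sum>m<n. cnj (u m) * P m i0) = cnj (\<Sum>m<n. P i0 m * u m)"
        by (simp add: Ph[OF _ i0] mult.commute)
      then show ?thesis using rng_u[OF i0] by simp
    qed
    have e2: "(\<Sum>m<n. cnj (u m) * (\<Sum>j<r. f m j * cnj (f i0 j))) = 0"
    proof -
      have "(\<Sum>m<n. cnj (u m) * (\<Sum>j<r. f m j * cnj (f i0 j))) = (\<Sum>m<n. \<Sum>j<r. cnj (u m) * f m j * cnj (f i0 j))"
        by (simp add: sum_distrib_left mult.assoc)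
      also have "\<dots> = (\<Sum>j<r. \<Sum>m<n. cnj (u m) * f m j * cnj (f i0 j))" by (rule sum.swap)
      also have "\<dots> = (\<Sum>j<r. (\<Sum>m<n. cnj (u m) * f m j) * cnj (f i0 j))"
        by (simp add: sum_distrib_right)
      also have "\<dots> = 0"
      proof (rule sum.neutral, intro ballI)
        fix j assume "j \<in> {..<r}"
        then have "(\<Sum>m<n. cnj (f m j) * u m) = 0" using orth_u by auto
        then have "cnj (\<Sum>m<n. cnj (f m j) * u m) = 0" by simp
        then have "(\<Sum>m<n. cnj (u m) * f m j) = 0" by (simp add: mult.commute)
        then show "(\<Sum>m<n. cnj (u m) * f m j) * cnj (f i0 j) = 0" by simp
      qed
      finally show ?thesis .
    qed
    have "(\<Sum>m<n. cnj (u m) * u m) = (\<Sum>m<n. cnj (u m) * P m i0) - (\<Sum>m<n. cnj (u m) * (\<Sum>j<r. f m j * cnj (f i0 j)))"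
    proof -
      have "(\<Sum>m<n. cnj (u m) * u m) = (\<Sum>m<n. cnj (u m) * P m i0 - cnj (u m) * (\<Sum>j<r. f m j * cnj (f i0 j)))"
        by (rule sum.cong[OF refl]) (simp add: right_diff_distrib u_def[of])
      then show ?thesis by (simp add: sum_subtractf)
    qed
    also have "\<dots> = cnj (u i0)" using e1 e2 by simp
    finally show ?thesis using ui0 by simp
  qed
  define c where "c = complex_of_real (sqrt (d i0))"
  have c0: "c \<noteq> 0" using di0 unfolding c_def by simp
  have cc: "cnj c * c = complex_of_real (d i0)" unfolding c_def using di0
    by (simp flip: of_real_mult)
  define v where "v = (\<lambda>m. u m / c)"
  show ?thesis
  proof (intro exI conjI allI impI)
    have "(\<Sum>m<n. cnj (v m) * v m) = (\<Sum>m<n. cnj (u m) * u m) / (cnj c * c)"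
      unfolding v_def by (simp add: sum_divide_distrib)
    then show "(\<Sum>m<n. cnj (v m) * v m) = 1" using norm_u cc di0 by simp
  next
    fix j assume "j < r"
    then show "(\<Sum>m<n. cnj (f m j) * v m) = 0" unfolding v_def
      using orth_u by (simp add: sum_divide_distrib[symmetric])
  next
    fix a assume "a < n"
    then show "(\<Sum>m<n. P a m * v m) = v a" unfolding v_def
      using rng_u by (simp add: sum_divide_distrib[symmetric])
  next
    fix i assume i: "i < n" and iC: "i \<notin> C"
    have "P i i0 = 0" using pres[OF i i0C iC] .
    moreover have "(\<Sum>j<r. f i j * cnj (f i0 j)) = 0"
    proof (rule sum.neutral, intro ballI)
      fix j assume "j \<in> {..<r}"
      then have j: "j < r" by simp
      show "f i j * cnj (f i0 j) = 0"
      proof (cases "inC j")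
        case True then show ?thesis using supp[OF i j] iC by simp
      next
        case False then show ?thesis using supp[OF i0 j] i0C by simp
      qed
    qed
    ultimately show "v i = 0" unfolding v_def u_def by simp
  qed
qed

lemma build:
  fixes P :: cmat and Cs :: "nat \<Rightarrow> nat set"
  assumes Ph: "\<And>a b. a < n \<Longrightarrow> b < n \<Longrightarrow> P $$ (a, b) = cnj (P $$ (b, a))"
    and PP: "\<And>a b. a < n \<Longrightarrow> b < n \<Longrightarrow> (\<Sum>m<n. P $$ (a, m) * P $$ (m, b)) = P $$ (a, b)"
  shows "(\<forall>j<r. Cs j \<subseteq> {..<n}) \<Longrightarrow>
    (\<forall>c<r. \<forall>i j. i < n \<longrightarrow> j \<in> Cs c \<longrightarrow> i \<notin> Cs c \<longrightarrow> P $$ (i, j) = 0) \<Longrightarrow>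
    (\<forall>j<r. \<forall>j'<r. Cs j = Cs j' \<or> Cs j \<inter> Cs j' = {}) \<Longrightarrow>
    (\<forall>j<r. real (card {j'. j' \<le> j \<and> Cs j' = Cs j}) \<le> (\<Sum>i\<in>Cs j. Re (P $$ (i, i)))) \<Longrightarrow>
    \<exists>F \<in> carrier_mat n r. (\<forall>j j'. j < r \<longrightarrow> j' < r \<longrightarrow> (\<Sum>m<n. cnj (F $$ (m, j)) * F $$ (m, j')) = (if j = j' then 1 else 0))
      \<and> (\<forall>a j. a < n \<longrightarrow> j < r \<longrightarrow> (\<Sum>m<n. P $$ (a, m) * F $$ (m, j)) = F $$ (a, j))
      \<and> (\<forall>i j. i < n \<longrightarrow> j < r \<longrightarrow> F $$ (i, j) \<noteq> 0 \<longrightarrow> i \<in> Cs j)"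
proof (induction r)
  case 0
  show ?case by (rule bexI[of _ "0\<^sub>m n 0"]) auto
next
  case (Suc r)
  have "\<exists>F \<in> carrier_mat n r. (\<forall>j j'. j < r \<longrightarrow> j' < r \<longrightarrow> (\<Sum>m<n. cnj (F $$ (m, j)) * F $$ (m, j')) = (if j = j' then 1 else 0))
      \<and> (\<forall>a j. a < n \<longrightarrow> j < r \<longrightarrow> (\<Sum>m<n. P $$ (a, m) * F $$ (m, j)) = F $$ (a, j))
      \<and> (\<forall>i j. i < n \<longrightarrow> j < r \<longrightarrow> F $$ (i, j) \<noteq> 0 \<longrightarrow> i \<in> Cs j)"
  proof (rule Suc.IH)
    show "\<forall>j<r. Cs j \<subseteq> {..<n}" using Suc.prems(1) by simp
    show "\<forall>c<r. \<forall>i j. i < n \<longrightarrow> j \<in> Cs c \<longrightarrow> i \<notin> Cs c \<longrightarrow> P $$ (i, j) = 0"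
      using Suc.prems(2) less_SucI by blast
    show "\<forall>j<r. \<forall>j'<r. Cs j = Cs j' \<or> Cs j \<inter> Cs j' = {}" using Suc.prems(3) by simp
    show "\<forall>j<r. real (card {j'. j' \<le> j \<and> Cs j' = Cs j}) \<le> (\<Sum>i\<in>Cs j. Re (P $$ (i, i)))"
      using Suc.prems(4) by simp
  qed
  then obtain F where F: "F \<in> carrier_mat n r"
    and FF: "\<And>j j'. j < r \<Longrightarrow> j' < r \<Longrightarrow> (\<Sum>m<n. cnj (F $$ (m, j)) * F $$ (m, j')) = (if j = j' then 1 else 0)"
    and PF: "\<And>a j. a < n \<Longrightarrow> j < r \<Longrightarrow> (\<Sum>m<n. P $$ (a, m) * F $$ (m, j)) = F $$ (a, j)"
    and FS: "\<And>i j. i < n \<Longrightarrow> j < r \<Longrightarrow> F $$ (i, j) \<noteq> 0 \<Longrightarrow> i \<in> Cs j"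
    by blast
  define C where "C = Cs r"
  have C: "C \<subseteq> {..<n}" using Suc.prems(1) unfolding C_def by auto
  have pres: "\<And>i j. i < n \<Longrightarrow> j \<in> C \<Longrightarrow> i \<notin> C \<Longrightarrow> P $$ (i, j) = 0"
    using Suc.prems(2) unfolding C_def by auto
  have supp: "F $$ (i, j) = 0" if "i < n" "j < r" "Cs j = C \<and> i \<notin> C \<or> Cs j \<noteq> C \<and> i \<in> C" for i j
  proof -
    have "Cs j = Cs r \<or> Cs j \<inter> Cs r = {}" using Suc.prems(3) that(2) by auto
    then have "i \<notin> Cs j" using that(3) unfolding C_def by auto
    then show ?thesis using FS[OF that(1,2)] by auto
  qed
  have cnt: "real (card {j. j < r \<and> Cs j = C}) < (\<Sum>i\<in>C. Re (P $$ (i, i)))"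
  proof -
    have "{j'. j' \<le> r \<and> Cs j' = Cs r} = insert r {j. j < r \<and> Cs j = C}" unfolding C_def by auto
    then have "card {j'. j' \<le> r \<and> Cs j' = Cs r} = Suc (card {j. j < r \<and> Cs j = C})"
      by (simp add: card_insert_disjoint)
    moreover have "real (card {j'. j' \<le> r \<and> Cs j' = Cs r}) \<le> (\<Sum>i\<in>Cs r. Re (P $$ (i, i)))"
      using Suc.prems(4) by auto
    ultimately show ?thesis unfolding C_def by simp
  qed
  obtain v where vn: "(\<Sum>m<n. cnj (v m) * v m) = 1"
    and vo: "\<And>j. j < r \<Longrightarrow> (\<Sum>m<n. cnj (F $$ (m, j)) * v m) = 0"
    and vr: "\<And>a. a < n \<Longrightarrow> (\<Sum>m<n. P $$ (a, m) * v m) = v a"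
    and vs: "\<And>i. i < n \<Longrightarrow> i \<notin> C \<Longrightarrow> v i = 0"
    using fill[where P="\<lambda>a b. P $$ (a, b)" and f="\<lambda>m j. F $$ (m, j)" and C=C and inC="\<lambda>j. Cs j = C" and n=n and r=r,
        OF Ph PP FF PF C pres supp cnt] by blast
  define F' where "F' = mat n (Suc r) (\<lambda>(i, j). if j < r then F $$ (i, j) else v i)"
  show ?case
  proof (rule bexI[of _ F'], intro conjI allI impI)
    show "F' \<in> carrier_mat n (Suc r)" unfolding F'_def by simp
  next
    fix j j' assume j: "j < Suc r" and j': "j' < Suc r"
    show "(\<Sum>m<n. cnj (F' $$ (m, j)) * F' $$ (m, j')) = (if j = j' then 1 else 0)"
    proof (cases "j < r"; cases "j' < r")
      assume "j < r" "j' < r" then show ?thesis unfolding F'_def using FF by simp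
    next
      assume a: "j < r" "\<not> j' < r"
      then have "j' = r" using j' by simp
      then show ?thesis unfolding F'_def using a vo by simp
    next
      assume a: "\<not> j < r" "j' < r"
      then have "j = r" using j by simp
      have "(\<Sum>m<n. cnj (v m) * F $$ (m, j')) = cnj (\<Sum>m<n. cnj (F $$ (m, j')) * v m)"
        by (simp add: mult.commute)
      then show ?thesis unfolding F'_def using a vo \<open>j = r\<close> by simp
    next
      assume a: "\<not> j < r" "\<not> j' < r"
      then show ?thesis unfolding F'_def using j j' vn by simp
    qed
  next
    fix a j assume a: "a < n" and j: "j < Suc r"
    show "(\<Sum>m<n. P $$ (a, m) * F' $$ (m, j)) = F' $$ (a, j)"
      unfolding F'_def using a j PF vr by simp
  next
    fix i j assume i: "i < n" and j: "j < Suc r" and nz: "F' $$ (i, j) \<noteq> 0"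
    show "i \<in> Cs j"
    proof (cases "j < r")
      case True then show ?thesis using FS[OF i True] nz i unfolding F'_def by simp
    next
      case False
      then have "j = r" using j by simp
      then show ?thesis using vs[OF i] nz i False unfolding F'_def C_def by auto
    qed
  qed
qed

lemma downclosed:
  assumes S: "S \<subseteq> {..<k}" and dc: "\<And>i j. i \<le> j \<Longrightarrow> j \<in> S \<Longrightarrow> i \<in> S"
  shows "S = {..<card S}"
proof (cases "S = {}")
  case True then show ?thesis by simp
next
  case False
  have fin: "finite S" using S finite_subset by blast
  define M where "M = Max S"
  have MS: "M \<in> S" using Max_in[OF fin False] M_def by simp
  have "S = {..M}"
  proof
    show "S \<subseteq> {..M}" using Max_ge[OF fin] M_def by auto
    show "{..M} \<subseteq> S" using dc MS by auto
  qed
  then show ?thesis by (simp add: lessThan_Suc_atMost)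
qed

lemma upclosed:
  assumes S: "S \<subseteq> {..<k}" and uc: "\<And>i j. i \<le> j \<Longrightarrow> j < k \<Longrightarrow> i \<in> S \<Longrightarrow> j \<in> S"
  shows "S = {k - card S..<k}"
proof -
  define T where "T = {..<k} - S"
  have "T = {..<card T}"
    by (rule downclosed[of _ k]) (use uc in \<open>auto simp: T_def\<close>)
  moreover have "card T = k - card S"
    unfolding T_def using S by (simp add: card_Diff_subset finite_subset)
  ultimately have T: "T = {..<k - card S}" by simp
  have h: "x < k \<and> x \<notin> S \<longleftrightarrow> x < k - card S" for x
  proof -
    have "x \<in> T \<longleftrightarrow> x < k - card S" using T by auto
    then show ?thesis unfolding T_def by auto
  qed
  have "x \<in> S \<longleftrightarrow> x \<in> {k - card S..<k}" for x
    using h[of x] S by auto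
  then show ?thesis by blast
qed

lemma psplit: fixes a b :: nat shows "(\<Sum>m<a + b. g m) = (\<Sum>m<a. g m) + (\<Sum>t<b. g (a + t))"
  by (induction b) (auto simp: add.assoc)

lemma ksplit:
  fixes k lm lp :: nat
  assumes "lp \<le> k - lm" "lm \<le> k"
  shows "(\<Sum>j<k. f j) = (\<Sum>j<lp. f j) + (\<Sum>j\<in>{lp..<k - lm}. f j) + (\<Sum>t<lm. f (k - lm + t))"
proof -
  have kk: "k - lm + lm = k" using assms by simp
  have "(\<Sum>j<k. f j) = (\<Sum>j<(k - lm) + lm. f j)" unfolding kk ..
  also have "\<dots> = (\<Sum>j<k - lm. f j) + (\<Sum>t<lm. f (k - lm + t))" by (rule psplit)
  also have "(\<Sum>j<k - lm. f j) = (\<Sum>j<lp. f j) + (\<Sum>j\<in>{lp..<k - lm}. f j)"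
  proof -
    have "{..<k - lm} = {..<lp} \<union> {lp..<k - lm}" using assms by auto
    moreover have "sum f ({..<lp} \<union> {lp..<k - lm}) = sum f {..<lp} + sum f {lp..<k - lm}"
      by (rule sum.union_disjoint) auto
    ultimately show ?thesis by simp
  qed
  finally show ?thesis .
qed

lemma flc_carrier[simp]: "first_last_cols a b N \<in> carrier_mat (dim_row N) (a + b)"
  unfolding first_last_cols_def by auto

lemma flc_dims[simp]: "dim_row (first_last_cols a b N) = dim_row N" "dim_col (first_last_cols a b N) = a + b"
  unfolding first_last_cols_def by auto

lemma flc_idx: "i < dim_row N \<Longrightarrow> j < a + b \<Longrightarrow>
  first_last_cols a b N $$ (i, j) = (if j < a then N $$ (i, j) else N $$ (i, j + dim_col N - (a + b)))"
  unfolding first_last_cols_def by auto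

lemma flc_mult:
  fixes M N :: cmat
  assumes "dim_col M = dim_row N" "a + b \<le> dim_col N"
  shows "M * first_last_cols a b N = first_last_cols a b (M * N)"
  by (rule eq_matI) (use assms in \<open>auto simp: flc_idx mult_idx simp del: index_mult_mat(1)\<close>)

lemma colspace_mult_unitary:
  fixes M R :: cmat
  assumes M: "M \<in> carrier_mat n p" and R: "R \<in> carrier_mat p p" and RR: "R * mat_adjoint R = 1\<^sub>m p"
  shows "colspace (M * R) = colspace M"
proof
  show "colspace (M * R) \<subseteq> colspace M"
  proof
    fix x assume "x \<in> colspace (M * R)"
    then obtain y where y: "y \<in> carrier_vec p" "x = M * R *\<^sub>v y" unfolding colspace_def using M R by auto
    have "x = M *\<^sub>v (R *\<^sub>v y)" using y M R by simp
    moreover have "R *\<^sub>v y \<in> carrier_vec p" using R y by simp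
    ultimately show "x \<in> colspace M" unfolding colspace_def using M by auto
  qed
  show "colspace M \<subseteq> colspace (M * R)"
  proof
    fix x assume "x \<in> colspace M"
    then obtain y where y: "y \<in> carrier_vec p" "x = M *\<^sub>v y" unfolding colspace_def using M by auto
    have Ra: "mat_adjoint R \<in> carrier_mat p p" using adj_carrier'[OF R] .
    have "M *\<^sub>v y = M *\<^sub>v ((R * mat_adjoint R) *\<^sub>v y)" using RR y by simp
    also have "\<dots> = (M * R) *\<^sub>v (mat_adjoint R *\<^sub>v y)" using M R Ra y
      by (simp add: assoc_mult_mat_vec)
    finally have xe: "x = (M * R) *\<^sub>v (mat_adjoint R *\<^sub>v y)" using y by simp
    have yc: "mat_adjoint R *\<^sub>v y \<in> carrier_vec (dim_col (M * R))" using Ra y R by simp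
    show "x \<in> colspace (M * R)" unfolding colspace_def using xe yc by blast
  qed
qed

lemma eig_mult:
  assumes W: "W \<in> carrier_mat n p" and e: "\<And>i j. i < n \<Longrightarrow> j < p \<Longrightarrow> W $$ (i, j) \<noteq> 0 \<Longrightarrow> lam i = mu j"
  shows "diagm n lam * W = W * diagm p mu"
  by (rule eq_matI) (use W e in \<open>auto simp: diag_mult_idx mult_diag_idx simp del: index_mult_mat(1)\<close>)

lemma count_lemma:
  fixes g w :: "nat \<Rightarrow> real" and J :: "nat set"
  assumes J: "J \<subseteq> {..<n}" and w01: "\<And>i. i < n \<Longrightarrow> 0 \<le> w i \<and> w i \<le> 1"
    and sw: "(\<Sum>i<n. w i) = real (card J)"
    and lo: "\<And>i. i < n \<Longrightarrow> g i < cz \<Longrightarrow> w i = 1"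
    and hi: "\<And>i. i < n \<Longrightarrow> cz < g i \<Longrightarrow> w i = 0"
    and KJ: "\<And>i. i < n \<Longrightarrow> g i < cz \<Longrightarrow> i \<in> J"
    and Jb: "\<And>j. j \<in> J \<Longrightarrow> g j \<le> cz"
  shows "real (card {j \<in> J. g j = c}) \<le> (\<Sum>i\<in>{i. i < n \<and> g i = c}. w i)"
proof -
  have finJ: "finite J" using J finite_subset by blast
  consider "c < cz" | "c = cz" | "cz < c" by linarith
  then show ?thesis
  proof cases
    case 1
    have "(\<Sum>i\<in>{i. i < n \<and> g i = c}. w i) = (\<Sum>i\<in>{i. i < n \<and> g i = c}. 1)"
      by (rule sum.cong) (use lo 1 in auto)
    also have "\<dots> = real (card {i. i < n \<and> g i = c})" by simp
    finally have e: "(\<Sum>i\<in>{i. i < n \<and> g i = c}. w i) = real (card {i. i < n \<and> g i = c})" .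
    have "card {j \<in> J. g j = c} \<le> card {i. i < n \<and> g i = c}"
      by (rule card_mono) (use J in auto)
    then show ?thesis using e by simp
  next
    case 3
    have "{j \<in> J. g j = c} = {}" using Jb 3 by force
    moreover have "0 \<le> (\<Sum>i\<in>{i. i < n \<and> g i = c}. w i)" by (rule sum_nonneg) (use w01 in auto)
    ultimately show ?thesis by (simp only: card.empty of_nat_0)
  next
    case 2
    define K where "K = {i. i < n \<and> g i < cz}"
    define L where "L = {i. i < n \<and> g i = cz}"
    define Gr where "Gr = {i. i < n \<and> cz < g i}"
    have part: "{..<n} = K \<union> (L \<union> Gr)" unfolding K_def L_def Gr_def by auto
    have "(\<Sum>i<n. w i) = (\<Sum>i\<in>K. w i) + ((\<Sum>i\<in>L. w i) + (\<Sum>i\<in>Gr. w i))"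
      unfolding part by (subst sum.union_disjoint, auto simp: K_def L_def Gr_def intro: sum.union_disjoint)+
    moreover have "(\<Sum>i\<in>K. w i) = real (card K)"
      using lo unfolding K_def by simp
    moreover have "(\<Sum>i\<in>Gr. w i) = 0" using hi unfolding Gr_def by simp
    ultimately have sL: "(\<Sum>i\<in>L. w i) = real (card J) - real (card K)" using sw by simp
    have KJ': "K \<subseteq> J" using KJ unfolding K_def by auto
    have "{j \<in> J. g j = c} \<subseteq> J - K" using 2 unfolding K_def by auto
    then have "card {j \<in> J. g j = c} \<le> card (J - K)" by (rule card_mono[OF finite_Diff[OF finJ]])
    also have "card (J - K) = card J - card K" using KJ' finJ by (simp add: card_Diff_subset finite_subset)
    finally have "real (card {j \<in> J. g j = c}) \<le> real (card J) - real (card K)"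
      using card_mono[OF finJ KJ'] by linarith
    then show ?thesis using sL 2 unfolding L_def by simp
  qed
qed

lemma det_omega_nz:
  assumes D: "D \<in> carrier_mat k k" and Q: "unitary_mat k Q"
    and QDQ: "mat_adjoint Q * D * Q = diagm k w" and dD: "det D \<noteq> 0" and j: "j < k"
  shows "w j \<noteq> 0"
proof
  assume w0: "w j = 0"
  note QQ = unitary_right[OF Q]
  have Qc: "Q \<in> carrier_mat k k" using QQ(2) .
  have Qa: "mat_adjoint Q \<in> carrier_mat k k" using adj_carrier'[OF Qc] .
  have "det (mat_adjoint Q * D * Q) = det (mat_adjoint Q * D) * det Q" by (rule det_mult[OF mult_carrier_mat[OF Qa D] Qc])
  also have "det (mat_adjoint Q * D) = det (mat_adjoint Q) * det D" by (rule det_mult[OF Qa D])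
  finally have e1: "det (mat_adjoint Q * D * Q) = det D * (det (mat_adjoint Q) * det Q)" by (simp add: algebra_simps)
  have "det (mat_adjoint Q) * det Q = 1" using det_mult[OF Qa Qc] QQ(3) by simp
  then have e2: "det (mat_adjoint Q * D * Q) = det D" using e1 by simp
  have ut: "upper_triangular (diagm k w)" unfolding upper_triangular_def by auto
  have "det (diagm k w) = prod_list (diag_mat (diagm k w))" by (rule det_upper_triangular[OF ut diagm_carrier])
  also have "\<dots> = 0"
  proof -
    have "0 \<in> set (diag_mat (diagm k w))" unfolding diag_mat_def using j w0 by force
    then show ?thesis by (simp add: prod_list_zero_iff)
  qed
  finally show False using e2 QDQ dD by simp
qed

theorem theorem2p1:
  fixes n k l :: nat and A B D U Q :: "complex mat"
    and lam \<omega> :: "nat \<Rightarrow> real"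
  assumes kn: "k \<le> n"
    and A: "hermitian_mat n A" and B: "pos_def_mat n B" and D: "hermitian_mat k D"
    and lam_sorted: "\<And>i j. i \<le> j \<Longrightarrow> j < n \<Longrightarrow> lam i \<le> lam j"
    and U: "U \<in> carrier_mat n n"
    and UAU: "mat_adjoint U * A * U = diagm n lam"
    and UBU: "mat_adjoint U * B * U = 1\<^sub>m n"
    and Q: "unitary_mat k Q"
    and QDQ: "mat_adjoint Q * D * Q = diagm k \<omega>"
    and \<omega>_sorted: "\<And>i j. i \<le> j \<Longrightarrow> j < k \<Longrightarrow> \<omega> j \<le> \<omega> i"
    and lk: "l \<le> k"
    and \<omega>_pos: "\<And>i. i < l \<Longrightarrow> 0 \<le> \<omega> i"
    and \<omega>_neg: "\<And>i. l \<le> i \<Longrightarrow> i < k \<Longrightarrow> \<omega> i \<le> 0"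
  defines "val \<equiv> (\<Sum>i<l. \<omega> i * lam i) + (\<Sum>i\<in>{l..<k}. \<omega> i * lam (i + n - k))"
  defines "feasible \<equiv> {X \<in> carrier_mat n k. mat_adjoint X * B * X = 1\<^sub>m k}"
  shows "complex_of_real val \<in> (\<lambda>X. mtrace (D * mat_adjoint X * A * X)) ` feasible
     \<and> (\<forall>X \<in> feasible. mtrace (D * mat_adjoint X * A * X) \<in> \<real>
                          \<and> val \<le> Re (mtrace (D * mat_adjoint X * A * X)))
     \<and> (\<forall>X \<in> feasible. mtrace (D * mat_adjoint X * A * X) = complex_of_real val \<longrightarrow>
          ((det D \<noteq> 0 \<longrightarrow>
              pencil_eigenspace n A B k (\<lambda>j. if j < l then lam j else lam (j + n - k))
                 (colspace (X * Q))
            \<and> ((\<forall>i<k. \<forall>j<k. i \<noteq> j \<longrightarrow> \<omega> i \<noteq> \<omega> j) \<longrightarrow>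
                 mat_adjoint (X * Q) * A * (X * Q)
                   = diagm k (\<lambda>j. if j < l then lam j else lam (j + n - k))))
          \<and> (let lp = card {i. i < k \<and> 0 < \<omega> i}; lm = card {i. i < k \<and> \<omega> i < 0};
                 Qh = first_last_cols lp lm Q
             in pencil_eigenspace n A B (lp + lm)
                  (\<lambda>j. if j < lp then lam j else lam (j + n - (lp + lm))) (colspace (X * Qh))
                \<and> ((\<forall>i<k. \<forall>j<k. i \<noteq> j \<longrightarrow> \<omega> i \<noteq> 0 \<longrightarrow> \<omega> i \<noteq> \<omega> j) \<longrightarrow>
                     mat_adjoint (X * Qh) * A * (X * Qh)
                       = diagm (lp + lm) (\<lambda>j. if j < lp then lam j else lam (j + n - (lp + lm)))))))"
proof -
  have Bh: "hermitian_mat n B" using B unfolding pos_def_mat_def by simp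
  have Ac: "A \<in> carrier_mat n n" using herm_carrier[OF A] .
  have Bc: "B \<in> carrier_mat n n" using herm_carrier[OF Bh] .
  have Dc: "D \<in> carrier_mat k k" using herm_carrier[OF D] .
  note QQ = unitary_right[OF Q]
  have Qc: "Q \<in> carrier_mat k k" using QQ(2) .
  have Qa: "mat_adjoint Q \<in> carrier_mat k k" using adj_carrier'[OF Qc] .
  have Ua: "mat_adjoint U \<in> carrier_mat n n" using adj_carrier'[OF U] .
  have Gc: "mat_adjoint U * B \<in> carrier_mat n n" using mult_carrier_mat[OF Ua Bc] .
  note ctx = A Bh U UAU UBU
  define lp where "lp = card {i. i < k \<and> 0 < \<omega> i}"
  define lm where "lm = card {i. i < k \<and> \<omega> i < 0}"
  have lp_set: "{i. i < k \<and> 0 < \<omega> i} = {..<lp}" unfolding lp_def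
  proof (rule downclosed[of _ k])
    show "{i. i < k \<and> 0 < \<omega> i} \<subseteq> {..<k}" by auto
    fix i j assume "i \<le> j" "j \<in> {i. i < k \<and> 0 < \<omega> i}"
    then show "i \<in> {i. i < k \<and> 0 < \<omega> i}" using \<omega>_sorted[of i j] by auto
  qed
  have lm_set: "{i. i < k \<and> \<omega> i < 0} = {k - lm..<k}" unfolding lm_def
  proof (rule upclosed[of _ k])
    show "{i. i < k \<and> \<omega> i < 0} \<subseteq> {..<k}" by auto
    fix i j assume "i \<le> j" "j < k" "i \<in> {i. i < k \<and> \<omega> i < 0}"
    then show "j \<in> {i. i < k \<and> \<omega> i < 0}" using \<omega>_sorted[of i j] by auto
  qed
  have pos_iff: "0 < \<omega> j \<longleftrightarrow> j < lp" if "j < k" for j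
  proof -
    have "j \<in> {i. i < k \<and> 0 < \<omega> i} \<longleftrightarrow> j \<in> {..<lp}" by (simp only: lp_set)
    then show ?thesis using that by simp
  qed
  have neg_iff: "\<omega> j < 0 \<longleftrightarrow> k - lm \<le> j" if "j < k" for j
  proof -
    have "j \<in> {i. i < k \<and> \<omega> i < 0} \<longleftrightarrow> j \<in> {k - lm..<k}" by (simp only: lm_set)
    then show ?thesis using that by simp
  qed
  have lmk: "lm \<le> k" unfolding lm_def by (rule order_trans[OF card_mono[of "{..<k}"]]) auto
  have lpk0: "lp \<le> k" unfolding lp_def by (rule order_trans[OF card_mono[of "{..<k}"]]) auto
  have lpl: "lp \<le> l"
  proof (rule ccontr)
    assume "\<not> lp \<le> l"
    then have "l < lp" "l < k" using lpk0 by auto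
    then have "0 < \<omega> l" using pos_iff by auto
    moreover have "\<omega> l \<le> 0" using \<omega>_neg[of l] \<open>l < k\<close> by auto
    ultimately show False by simp
  qed
  have llm: "l \<le> k - lm"
  proof (rule ccontr)
    assume a: "\<not> l \<le> k - lm"
    then have "k - lm < k" using lk by auto
    then have "\<omega> (k - lm) < 0" using neg_iff by auto
    moreover have "0 \<le> \<omega> (k - lm)" using \<omega>_pos[of "k - lm"] a by auto
    ultimately show False by simp
  qed
  have lpk: "lp \<le> k - lm" using lpl llm by simp
  have zero_mid: "\<omega> j = 0" if "lp \<le> j" "j < k - lm" for j
  proof -
    have "j < k" using that lmk by linarith
    then have "\<not> 0 < \<omega> j" "\<not> \<omega> j < 0" using pos_iff[of j] neg_iff[of j] that by auto
    then show ?thesis by linarith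
  qed
  define e where "e = (\<lambda>j. if j < l then j else j + n - k)"
  have val_e: "val = (\<Sum>j<k. \<omega> j * lam (e j))"
  proof -
    have kk: "{..<k} = {..<l} \<union> {l..<k}" using lk by auto
    have "(\<Sum>j\<in>{..<l} \<union> {l..<k}. \<omega> j * lam (e j)) = (\<Sum>j<l. \<omega> j * lam (e j)) + (\<Sum>j\<in>{l..<k}. \<omega> j * lam (e j))"
      by (rule sum.union_disjoint) auto
    then have "(\<Sum>j<k. \<omega> j * lam (e j)) = (\<Sum>j<l. \<omega> j * lam (e j)) + (\<Sum>j\<in>{l..<k}. \<omega> j * lam (e j))"
      unfolding kk .
    moreover have "(\<Sum>j<l. \<omega> j * lam (e j)) = (\<Sum>j<l. \<omega> j * lam j)" by (rule sum.cong) (auto simp: e_def)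
    moreover have "(\<Sum>j\<in>{l..<k}. \<omega> j * lam (e j)) = (\<Sum>j\<in>{l..<k}. \<omega> j * lam (j + n - k))"
      by (rule sum.cong) (auto simp: e_def)
    ultimately show ?thesis unfolding val_def by simp
  qed
  define PosV where "PosV = (\<Sum>j<lp. \<omega> j * lam j)"
  define NegV where "NegV = (\<Sum>t<lm. \<omega> (k - lm + t) * lam (n - lm + t))"
  have val2: "val = PosV + NegV"
  proof -
    have "val = (\<Sum>j<lp. \<omega> j * lam (e j)) + (\<Sum>j\<in>{lp..<k - lm}. \<omega> j * lam (e j)) + (\<Sum>t<lm. \<omega> (k - lm + t) * lam (e (k - lm + t)))"
      unfolding val_e by (rule ksplit[OF lpk lmk])
    moreover have "(\<Sum>j\<in>{lp..<k - lm}. \<omega> j * lam (e j)) = 0" by (rule sum.neutral) (auto simp: zero_mid)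
    moreover have "(\<Sum>j<lp. \<omega> j * lam (e j)) = PosV" unfolding PosV_def
      by (rule sum.cong) (use lpl in \<open>auto simp: e_def\<close>)
    moreover have "(\<Sum>t<lm. \<omega> (k - lm + t) * lam (e (k - lm + t))) = NegV" unfolding NegV_def
    proof (rule sum.cong[OF refl])
      fix t assume "t \<in> {..<lm}"
      have "e (k - lm + t) = n - lm + t" unfolding e_def using llm lmk kn by auto
      then show "\<omega> (k - lm + t) * lam (e (k - lm + t)) = \<omega> (k - lm + t) * lam (n - lm + t)" by simp
    qed
    ultimately show ?thesis by simp
  qed
  define Zf where "Zf = (\<lambda>X. mat_adjoint U * B * X * Q)"
  have Zc: "Zf X \<in> carrier_mat n k" if "X \<in> carrier_mat n k" for X
    unfolding Zf_def using that Gc Qc by (metis mult_carrier_mat)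
  have NX: "U * (mat_adjoint U * B * X) = X" if "X \<in> carrier_mat n k" for X
    by (rule X_eq[OF ctx that])
  have XQ: "X * Q = U * Zf X" if X: "X \<in> carrier_mat n k" for X
  proof -
    have N: "mat_adjoint U * B * X \<in> carrier_mat n k" using mult_carrier_mat[OF Gc X] .
    have "U * Zf X = (U * (mat_adjoint U * B * X)) * Q" unfolding Zf_def by (rule assoc_mult_mat[OF U N Qc, symmetric])
    then show ?thesis using NX[OF X] by simp
  qed
  have XZ: "X = U * (Zf X * mat_adjoint Q)" if X: "X \<in> carrier_mat n k" for X
  proof -
    have "U * (Zf X * mat_adjoint Q) = (U * Zf X) * mat_adjoint Q" by (rule assoc_mult_mat[OF U Zc[OF X] Qa, symmetric])
    also have "\<dots> = X * Q * mat_adjoint Q" using XQ[OF X] by simp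
    also have "\<dots> = X * (Q * mat_adjoint Q)" by (rule assoc_mult_mat[OF X Qc Qa])
    finally show ?thesis using QQ(1) X by simp
  qed
  have ZZ: "mat_adjoint (Zf X) * Zf X = 1\<^sub>m k" if X: "X \<in> feasible" for X
  proof -
    have Xc: "X \<in> carrier_mat n k" and XBX: "mat_adjoint X * B * X = 1\<^sub>m k" using X unfolding feasible_def by auto
    define N where "N = mat_adjoint U * B * X"
    have N: "N \<in> carrier_mat n k" unfolding N_def using mult_carrier_mat[OF Gc Xc] .
    have Na: "mat_adjoint N \<in> carrier_mat k n" using adj_carrier'[OF N] .
    have NN: "mat_adjoint N * N = 1\<^sub>m k" using adjUN_B[OF ctx N] NX[OF Xc] XBX unfolding N_def by simp
    have "mat_adjoint (Zf X) = mat_adjoint Q * mat_adjoint N" unfolding Zf_def N_def[symmetric] by (rule adj_mult[OF N Qc])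
    then have "mat_adjoint (Zf X) * Zf X = mat_adjoint Q * mat_adjoint N * (N * Q)" unfolding Zf_def N_def by simp
    also have "\<dots> = mat_adjoint Q * (mat_adjoint N * (N * Q))" by (rule assoc_mult_mat[OF Qa Na mult_carrier_mat[OF N Qc]])
    also have "mat_adjoint N * (N * Q) = (mat_adjoint N * N) * Q" by (rule assoc_mult_mat[OF Na N Qc, symmetric])
    finally show ?thesis using NN QQ(3) Qc by simp
  qed
  have TRg: "mtrace (D * mat_adjoint X * A * X) = complex_of_real (\<Sum>j<k. \<omega> j * (\<Sum>i<n. lam i * (cmod (Zz $$ (i, j)))\<^sup>2))"
    if Zz: "Zz \<in> carrier_mat n k" and XM': "X = U * (Zz * mat_adjoint Q)" for X Zz
  proof -
    define M where "M = Zz * mat_adjoint Q"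
    have M: "M \<in> carrier_mat n k" unfolding M_def using mult_carrier_mat[OF Zz Qa] .
    have XM: "X = U * M" using XM' unfolding M_def .
    have X: "X \<in> carrier_mat n k" unfolding XM using mult_carrier_mat[OF U M] .
    have Xa: "mat_adjoint X \<in> carrier_mat k n" using adj_carrier'[OF X] .
    have "D * mat_adjoint X * A * X = D * (mat_adjoint X * A * X)"
    proof -
      have "D * mat_adjoint X * A = D * (mat_adjoint X * A)" by (rule assoc_mult_mat[OF Dc Xa Ac])
      then have "D * mat_adjoint X * A * X = D * (mat_adjoint X * A) * X" by simp
      also have "\<dots> = D * (mat_adjoint X * A * X)" by (rule assoc_mult_mat[OF Dc mult_carrier_mat[OF Xa Ac] X])
      finally show ?thesis .
    qed
    also have "mat_adjoint X * A * X = mat_adjoint M * diagm n lam * M"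
      using adjUN_A[OF ctx M] XM by simp
    finally have "mtrace (D * mat_adjoint X * A * X) = mtrace (D * (mat_adjoint M * diagm n lam * M))" by simp
    then show ?thesis unfolding M_def using trace_formula[OF Dc Q QDQ Zz] by simp
  qed
  define pw where "pw = (\<lambda>X i j. (cmod (Zf X $$ (i, j)))\<^sup>2)"
  define cf where "cf = (\<lambda>X j. \<Sum>i<n. lam i * pw X i j)"
  define PosF where "PosF = (\<lambda>X. \<Sum>j<lp. \<omega> j * cf X j)"
  define NegF where "NegF = (\<lambda>X. \<Sum>t<lm. \<omega> (k - lm + t) * cf X (k - lm + t))"
  have TR: "mtrace (D * mat_adjoint X * A * X) = complex_of_real (PosF X + NegF X)"
    if X: "X \<in> carrier_mat n k" for X
  proof -
    have "mtrace (D * mat_adjoint X * A * X) = complex_of_real (\<Sum>j<k. \<omega> j * cf X j)"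
      using TRg[OF Zc[OF X] XZ[OF X]] unfolding cf_def pw_def .
    moreover have "(\<Sum>j<k. \<omega> j * cf X j) = PosF X + NegF X"
    proof -
      have "(\<Sum>j<k. \<omega> j * cf X j) = (\<Sum>j<lp. \<omega> j * cf X j) + (\<Sum>j\<in>{lp..<k - lm}. \<omega> j * cf X j) + (\<Sum>t<lm. \<omega> (k - lm + t) * cf X (k - lm + t))"
        by (rule ksplit[OF lpk lmk])
      moreover have "(\<Sum>j\<in>{lp..<k - lm}. \<omega> j * cf X j) = 0" by (rule sum.neutral) (auto simp: zero_mid)
      ultimately show ?thesis unfolding PosF_def NegF_def by simp
    qed
    ultimately show ?thesis by simp
  qed
  have pnn: "0 \<le> pw X i j" for X i j unfolding pw_def by simp
  have cs: "(\<Sum>i<n. pw X i j) = 1" if X: "X \<in> feasible" and j: "j < k" for X j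
    unfolding pw_def using orth_col[OF Zc ZZ[OF X] j] X unfolding feasible_def by auto
  have rsk: "(\<Sum>j<k. pw X i j) \<le> 1" if X: "X \<in> feasible" and i: "i < n" for X i
    unfolding pw_def using bessel(1)[OF Zc ZZ[OF X] i] X unfolding feasible_def by auto
  have rs_pos: "(\<Sum>j<lp. pw X i j) \<le> 1" if X: "X \<in> feasible" and i: "i < n" for X i
  proof -
    have "(\<Sum>j<lp. pw X i j) \<le> (\<Sum>j<k. pw X i j)" by (rule sum_mono2) (use lpk0 pnn in auto)
    then show ?thesis using rsk[OF X i] by linarith
  qed
  have rs_neg: "(\<Sum>t<lm. pw X i (k - lm + t)) \<le> 1" if X: "X \<in> feasible" and i: "i < n" for X i
  proof -
    have "(\<Sum>j<k. pw X i j) = (\<Sum>j<lp. pw X i j) + (\<Sum>j\<in>{lp..<k - lm}. pw X i j) + (\<Sum>t<lm. pw X i (k - lm + t))"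
      by (rule ksplit[OF lpk lmk])
    moreover have "0 \<le> (\<Sum>j<lp. pw X i j)" "0 \<le> (\<Sum>j\<in>{lp..<k - lm}. pw X i j)" by (auto intro: sum_nonneg simp: pnn)
    ultimately show ?thesis using rsk[OF X i] by linarith
  qed
  have lpn: "lp \<le> n" using lpk0 kn by simp
  have lmn: "lm \<le> n" using lmk kn by simp
  have dec_pos: "\<omega> j \<le> \<omega> i" if "i \<le> j" "j < lp" for i j using \<omega>_sorted that lpk0 by auto
  have nn_pos: "0 \<le> \<omega> j" if "j < lp" for j using pos_iff[of j] that lpk0 by auto
  have dec_neg: "\<omega> (k - lm + j) \<le> \<omega> (k - lm + i)" if "i \<le> j" "j < lm" for i j using \<omega>_sorted that lmk by auto
  have neg_lt: "\<omega> (k - lm + j) < 0" if "j < lm" for j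
  proof -
    have "k - lm + j < k" using that lmk by linarith
    then show ?thesis using neg_iff[of "k - lm + j"] by simp
  qed
  have np_neg: "\<omega> (k - lm + j) \<le> 0" if "j < lm" for j using neg_lt[OF that] by simp
  have cs_neg: "(\<Sum>i<n. pw X i (k - lm + t)) = 1" if X: "X \<in> feasible" and t: "t < lm" for X t
    using cs[OF X] t lmk by auto
  have PB1: "PosV \<le> PosF X" if X: "X \<in> feasible" for X
  proof -
    have "(\<Sum>j<lp. \<omega> j * lam j) \<le> (\<Sum>j<lp. \<omega> j * (\<Sum>i<n. lam i * pw X i j))"
      by (rule pos_block(1)[where lam=lam and w=\<omega> and q=lp and n=n and p="pw X"]) (use lam_sorted lpn pnn cs[OF X] rs_pos[OF X] dec_pos nn_pos lpk0 in auto)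
    then show ?thesis unfolding PosV_def PosF_def cf_def .
  qed
  have NB1: "NegV \<le> NegF X" if X: "X \<in> feasible" for X
  proof -
    have "(\<Sum>t<lm. \<omega> (k - lm + t) * lam (n - lm + t)) \<le> (\<Sum>t<lm. \<omega> (k - lm + t) * (\<Sum>i<n. lam i * pw X i (k - lm + t)))"
      by (rule neg_block(1)[where lam=lam and w="\<lambda>t. \<omega> (k - lm + t)" and q=lm and n=n and p="\<lambda>i t. pw X i (k - lm + t)"]) (use lam_sorted lmn pnn cs_neg[OF X] rs_neg[OF X] dec_neg np_neg in auto)
    then show ?thesis unfolding NegV_def NegF_def cf_def .
  qed
  have e_lt: "e j < n" if "j < k" for j unfolding e_def using that lk kn by auto
  have e_inj: "e a = e b \<Longrightarrow> a = b" if "a < k" "b < k" for a b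
    unfolding e_def using that lk kn by (auto split: if_splits)
  show ?thesis (is "?P1 \<and> ?P2 \<and> ?P3")
  proof (intro conjI)
    define Z0 where "Z0 = mat n k (\<lambda>(i, j). if i = e j then 1 else (0::complex))"
    have Z0: "Z0 \<in> carrier_mat n k" unfolding Z0_def by simp
    define X0 where "X0 = U * (Z0 * mat_adjoint Q)"
    have M0: "Z0 * mat_adjoint Q \<in> carrier_mat n k" using mult_carrier_mat[OF Z0 Qa] .
    have X0: "X0 \<in> carrier_mat n k" unfolding X0_def using mult_carrier_mat[OF U M0] .
    have Z0Z0: "mat_adjoint Z0 * Z0 = 1\<^sub>m k"
    proof (rule eq_matI)
      fix a b assume a: "a < dim_row (1\<^sub>m k :: cmat)" and b: "b < dim_col (1\<^sub>m k :: cmat)"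
      have a': "a < k" and b': "b < k" using a b by auto
      have "(mat_adjoint Z0 * Z0) $$ (a, b) = (\<Sum>i<n. mat_adjoint Z0 $$ (a, i) * Z0 $$ (i, b))"
        using Z0 a' b' by (subst mult_idx) auto
      also have "\<dots> = (\<Sum>i<n. if i = e b then (if e b = e a then 1 else 0) else 0)"
        by (rule sum.cong) (use a' b' Z0 in \<open>auto simp: Z0_def e_lt\<close>)
      also have "\<dots> = (if e b = e a then 1 else 0)" using e_lt[OF b'] by simp
      finally show "(mat_adjoint Z0 * Z0) $$ (a, b) = 1\<^sub>m k $$ (a, b)" using e_inj[OF a' b'] a' b' by auto
    qed (use Z0 in auto)
    have Z0a: "mat_adjoint Z0 \<in> carrier_mat k n" using adj_carrier'[OF Z0] .
    have X0feas: "X0 \<in> feasible"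
    proof -
      have "mat_adjoint X0 * B * X0 = mat_adjoint (Z0 * mat_adjoint Q) * (Z0 * mat_adjoint Q)"
        unfolding X0_def by (rule adjUN_B[OF ctx M0])
      also have "mat_adjoint (Z0 * mat_adjoint Q) = Q * mat_adjoint Z0" using adj_mult[OF Z0 Qa] by simp
      also have "Q * mat_adjoint Z0 * (Z0 * mat_adjoint Q) = Q * (mat_adjoint Z0 * (Z0 * mat_adjoint Q))"
        by (rule assoc_mult_mat[OF Qc Z0a M0])
      also have "mat_adjoint Z0 * (Z0 * mat_adjoint Q) = (mat_adjoint Z0 * Z0) * mat_adjoint Q"
        by (rule assoc_mult_mat[OF Z0a Z0 Qa, symmetric])
      finally have "mat_adjoint X0 * B * X0 = Q * (1\<^sub>m k * mat_adjoint Q)" using Z0Z0 by simp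
      also have "1\<^sub>m k * mat_adjoint Q = mat_adjoint Q" by (rule left_mult_one_mat[OF Qa])
      finally have "mat_adjoint X0 * B * X0 = 1\<^sub>m k" using QQ(1) by simp
      then show ?thesis unfolding feasible_def using X0 by simp
    qed
    have "mtrace (D * mat_adjoint X0 * A * X0) = complex_of_real (\<Sum>j<k. \<omega> j * (\<Sum>i<n. lam i * (cmod (Z0 $$ (i, j)))\<^sup>2))"
      by (rule TRg[OF Z0 X0_def])
    also have "(\<Sum>j<k. \<omega> j * (\<Sum>i<n. lam i * (cmod (Z0 $$ (i, j)))\<^sup>2)) = (\<Sum>j<k. \<omega> j * lam (e j))"
    proof (rule sum.cong[OF refl])
      fix j assume j: "j \<in> {..<k}"
      have "(\<Sum>i<n. lam i * (cmod (Z0 $$ (i, j)))\<^sup>2) = (\<Sum>i<n. if i = e j then lam (e j) else 0)"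
        by (rule sum.cong) (use j in \<open>auto simp: Z0_def\<close>)
      also have "\<dots> = lam (e j)" using e_lt j by simp
      finally show "\<omega> j * (\<Sum>i<n. lam i * (cmod (Z0 $$ (i, j)))\<^sup>2) = \<omega> j * lam (e j)" by simp
    qed
    finally have eqv: "mtrace (D * mat_adjoint X0 * A * X0) = complex_of_real val" using val_e by simp
    show "complex_of_real val \<in> (\<lambda>X. mtrace (D * mat_adjoint X * A * X)) ` feasible"
      by (rule image_eqI[where x=X0]) (simp_all add: eqv X0feas)
  next
    show "\<forall>X\<in>feasible. mtrace (D * mat_adjoint X * A * X) \<in> \<real> \<and> val \<le> Re (mtrace (D * mat_adjoint X * A * X))"
    proof
      fix X assume X: "X \<in> feasible"
      have Xc: "X \<in> carrier_mat n k" using X unfolding feasible_def by auto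
      show "mtrace (D * mat_adjoint X * A * X) \<in> \<real> \<and> val \<le> Re (mtrace (D * mat_adjoint X * A * X))"
        using TR[OF Xc] PB1[OF X] NB1[OF X] val2 by simp
    qed
  next
    show ?P3
    proof (intro ballI impI)
      fix X assume X: "X \<in> feasible" and eqX: "mtrace (D * mat_adjoint X * A * X) = complex_of_real val"
      have Xc: "X \<in> carrier_mat n k" using X unfolding feasible_def by auto
      have "complex_of_real (PosF X + NegF X) = complex_of_real (PosV + NegV)" using TR[OF Xc] eqX val2 by simp
      then have sumeq: "PosF X + NegF X = PosV + NegV" using of_real_eq_iff by blast
      have posEq: "PosV = PosF X" and negEq: "NegV = NegF X" using sumeq PB1[OF X] NB1[OF X] by linarith+
      define Z where "Z = Zf X"
      have Z: "Z \<in> carrier_mat n k" unfolding Z_def using Zc[OF Xc] .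
      have ZZ': "mat_adjoint Z * Z = 1\<^sub>m k" unfolding Z_def using ZZ[OF X] .
      define p where "p = lp + lm"
      have pk: "p \<le> k" unfolding p_def using lpk lmk by linarith
      define sig where "sig = (\<lambda>m. if m < lp then m else k - lm + (m - lp))"
      have sig_lt: "sig m < k" if "m < p" for m unfolding sig_def using that lpk lmk p_def by auto
      have sig_inj: "sig a = sig b \<Longrightarrow> a = b" if "a < p" "b < p" for a b
        unfolding sig_def using that lpk lmk p_def by (auto split: if_splits)
      define Zh where "Zh = first_last_cols lp lm Z"
      have Zh: "Zh \<in> carrier_mat n p" unfolding Zh_def p_def using flc_carrier[of lp lm Z] Z by simp
      have Zh_idx: "Zh $$ (i, m) = Z $$ (i, sig m)" if "i < n" "m < p" for i m
      proof -
        have "Zh $$ (i, m) = (if m < lp then Z $$ (i, m) else Z $$ (i, m + k - (lp + lm)))"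
          unfolding Zh_def using flc_idx[of i Z m lp lm] that Z p_def by simp
        moreover have "m + k - (lp + lm) = k - lm + (m - lp)" if "\<not> m < lp" using that lmk by simp
        ultimately show ?thesis unfolding sig_def by simp
      qed
      have ZhZh: "mat_adjoint Zh * Zh = 1\<^sub>m p"
      proof (rule eq_matI)
        fix a b assume a: "a < dim_row (1\<^sub>m p :: cmat)" and b: "b < dim_col (1\<^sub>m p :: cmat)"
        have a': "a < p" and b': "b < p" using a b by auto
        have "(mat_adjoint Zh * Zh) $$ (a, b) = (\<Sum>i<n. mat_adjoint Zh $$ (a, i) * Zh $$ (i, b))"
          using Zh a' b' by (subst mult_idx) auto
        also have "\<dots> = (\<Sum>i<n. cnj (Z $$ (i, sig a)) * Z $$ (i, sig b))"
          by (rule sum.cong) (use Zh a' b' in \<open>auto simp: Zh_idx\<close>)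
        also have "\<dots> = (if sig a = sig b then 1 else 0)" by (rule orth_inner[OF Z ZZ' sig_lt[OF a'] sig_lt[OF b']])
        finally show "(mat_adjoint Zh * Zh) $$ (a, b) = 1\<^sub>m p $$ (a, b)" using sig_inj[OF a' b'] a' b' by auto
      qed (use Zh in auto)
      have XQh: "X * first_last_cols lp lm Q = U * Zh"
      proof -
        have "X * first_last_cols lp lm Q = first_last_cols lp lm (X * Q)"
          by (rule flc_mult) (use Xc Qc lpk lmk in auto)
        also have "X * Q = U * Z" unfolding Z_def using XQ[OF Xc] .
        also have "first_last_cols lp lm (U * Z) = U * first_last_cols lp lm Z"
          by (rule flc_mult[symmetric]) (use U Z lpk lmk in auto)
        finally show ?thesis unfolding Zh_def .
      qed
      define wp where "wp = (\<lambda>i. \<Sum>j<lp. pw X i j)"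
      define wm where "wm = (\<lambda>i. \<Sum>t<lm. pw X i (k - lm + t))"
      have pwZ: "pw X i j = (cmod (Z $$ (i, j)))\<^sup>2" for i j unfolding pw_def Z_def by simp
      have wp0: "0 \<le> wp i" for i unfolding wp_def by (auto intro: sum_nonneg simp: pnn)
      have wm0: "0 \<le> wm i" for i unfolding wm_def by (auto intro: sum_nonneg simp: pnn)
      have rowZh: "(\<Sum>m<p. (cmod (Zh $$ (i, m)))\<^sup>2) = wp i + wm i" if i: "i < n" for i
      proof -
        have "(\<Sum>m<p. (cmod (Zh $$ (i, m)))\<^sup>2) = (\<Sum>m<lp. (cmod (Zh $$ (i, m)))\<^sup>2) + (\<Sum>t<lm. (cmod (Zh $$ (i, lp + t)))\<^sup>2)"
          unfolding p_def by (rule psplit)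
        moreover have "(\<Sum>m<lp. (cmod (Zh $$ (i, m)))\<^sup>2) = wp i"
          unfolding wp_def by (rule sum.cong) (use i p_def in \<open>auto simp: Zh_idx sig_def pwZ\<close>)
        moreover have "(\<Sum>t<lm. (cmod (Zh $$ (i, lp + t)))\<^sup>2) = wm i"
          unfolding wm_def by (rule sum.cong) (use i p_def in \<open>auto simp: Zh_idx sig_def pwZ\<close>)
        ultimately show ?thesis by simp
      qed
      have wle: "wp i + wm i \<le> 1" if "i < n" for i using bessel(1)[OF Zh ZhZh that] rowZh[OF that] by simp
      define P where "P = Zh * mat_adjoint Zh"
      note PPs = proj_props[OF Zh ZhZh, folded P_def]
      have Pcol: "P $$ (m, i) = (if m = i then 1 else 0)" if "i < n" "m < n" "wp i + wm i = 1" for i m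
        using bessel(2)[OF Zh ZhZh that(1) _ that(2)] rowZh[OF that(1)] that(3) unfolding P_def by simp
      have Pidx: "P $$ (a, b) = (\<Sum>m<p. Zh $$ (a, m) * cnj (Zh $$ (b, m)))" if "a < n" "b < n" for a b
        unfolding P_def using Zh that by (subst mult_idx) auto
      have Ph: "P $$ (a, b) = cnj (P $$ (b, a))" if "a < n" "b < n" for a b
      proof -
        have "P $$ (a, b) = mat_adjoint P $$ (a, b)" using PPs(2) by simp
        also have "\<dots> = cnj (P $$ (b, a))" using PPs(1) that by simp
        finally show ?thesis .
      qed
      have PP: "(\<Sum>m<n. P $$ (a, m) * P $$ (m, b)) = P $$ (a, b)" if "a < n" "b < n" for a b
      proof -
        have "(P * P) $$ (a, b) = (\<Sum>m<n. P $$ (a, m) * P $$ (m, b))" using PPs(1) that by (subst mult_idx) auto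
        then show ?thesis using PPs(3) by simp
      qed
      have Pdiag: "Re (P $$ (i, i)) = wp i + wm i" if i: "i < n" for i
      proof -
        have "P $$ (i, i) = (\<Sum>m<p. complex_of_real ((cmod (Zh $$ (i, m)))\<^sup>2))"
          unfolding Pidx[OF i i]
        proof (rule sum.cong[OF refl])
          fix m show "Zh $$ (i, m) * cnj (Zh $$ (i, m)) = complex_of_real ((cmod (Zh $$ (i, m)))\<^sup>2)"
            using cnj_mult_self[of "Zh $$ (i, m)"] by (simp only: mult.commute)
        qed
        also have "\<dots> = complex_of_real (wp i + wm i)" using rowZh[OF i] by (simp only: of_real_sum[symmetric])
        finally show ?thesis by simp
      qed
      define mu where "mu = (\<lambda>j. if j < lp then lam j else lam (j + n - p))"
      have Zh_sig: "Zh $$ (i, lp + t) = Z $$ (i, k - lm + t)" if "i < n" "t < lm" for i t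
        using Zh_idx[of i "lp + t"] that unfolding sig_def p_def by simp
      have mu_neg: "mu (lp + t) = lam (n - lm + t)" if "t < lm" for t
        unfolding mu_def p_def using that lmk kn by (simp add: algebra_simps)
      have posEq': "(\<Sum>j<lp. \<omega> j * lam j) = (\<Sum>j<lp. \<omega> j * (\<Sum>i<n. lam i * pw X i j))"
        using posEq unfolding PosV_def PosF_def cf_def .
      have negEq': "(\<Sum>t<lm. \<omega> (k - lm + t) * lam (n - lm + t)) = (\<Sum>t<lm. \<omega> (k - lm + t) * (\<Sum>i<n. lam i * pw X i (k - lm + t)))"
        using negEq unfolding NegV_def NegF_def cf_def .
      have pos_lt: "0 < \<omega> j" if "j < lp" for j using pos_iff[of j] that lpk0 by auto
      have B2: "(\<forall>i<k. \<forall>j<k. i \<noteq> j \<longrightarrow> \<omega> i \<noteq> 0 \<longrightarrow> \<omega> i \<noteq> \<omega> j) \<longrightarrow>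
          mat_adjoint (X * first_last_cols lp lm Q) * A * (X * first_last_cols lp lm Q) = diagm p (\<lambda>j. if j < lp then lam j else lam (j + n - p))"
      proof
        assume dist: "\<forall>i<k. \<forall>j<k. i \<noteq> j \<longrightarrow> \<omega> i \<noteq> 0 \<longrightarrow> \<omega> i \<noteq> \<omega> j"
        have sdec_p: "\<omega> b < \<omega> a" if "a < b" "b < lp" for a b
        proof -
          have "\<omega> b \<le> \<omega> a" using \<omega>_sorted[of a b] that lpk0 by auto
          moreover have "\<omega> a \<noteq> \<omega> b" using dist that lpk0 pos_lt[of a] by auto
          ultimately show ?thesis by simp
        qed
        have sdec_m: "\<omega> (k - lm + b) < \<omega> (k - lm + a)" if "a < b" "b < lm" for a b
        proof -
          have "\<omega> (k - lm + b) \<le> \<omega> (k - lm + a)" using \<omega>_sorted[of "k - lm + a" "k - lm + b"] that lmk by auto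
          moreover have "\<omega> (k - lm + a) \<noteq> \<omega> (k - lm + b)" using dist that lmk neg_lt[of a] by auto
          ultimately show ?thesis by simp
        qed
        have supp: "lam i = mu m" if i: "i < n" and m: "m < p" and nz: "Zh $$ (i, m) \<noteq> 0" for i m
        proof (cases "m < lp")
          case True
          show ?thesis
          proof (rule ccontr)
            assume ne: "lam i \<noteq> mu m"
            have "pw X i m = 0"
              by (rule pos_block(3)[where lam=lam and w=\<omega> and q=lp and n=n and p="pw X"])
                 (use lam_sorted lpn pnn cs[OF X] rs_pos[OF X] dec_pos nn_pos lpk0 posEq' sdec_p pos_lt i True ne mu_def in auto)
            then have "Z $$ (i, m) = 0" unfolding pwZ by simp
            then show False using nz Zh_idx[OF i m] True unfolding sig_def by simp
          qed
        next
          case False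
          define t where "t = m - lp"
          have t: "t < lm" and mt: "m = lp + t" using False m unfolding t_def p_def by auto
          show ?thesis
          proof (rule ccontr)
            assume ne: "lam i \<noteq> mu m"
            have "pw X i (k - lm + t) = 0"
              by (rule neg_block(3)[where lam=lam and w="\<lambda>t. \<omega> (k - lm + t)" and q=lm and n=n and p="\<lambda>i t. pw X i (k - lm + t)"])
                 (use lam_sorted lmn pnn cs_neg[OF X] rs_neg[OF X] dec_neg np_neg negEq' sdec_m neg_lt i t ne mu_neg[OF t] mt in auto)
            then have "Z $$ (i, k - lm + t) = 0" unfolding pwZ by simp
            then show False using nz Zh_sig[OF i t] mt by simp
          qed
        qed
        have "mat_adjoint (X * first_last_cols lp lm Q) * A * (X * first_last_cols lp lm Q) = mat_adjoint Zh * diagm n lam * Zh"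
          unfolding XQh by (rule adjUN_A[OF ctx Zh])
        also have "\<dots> = diagm p mu"
        proof (rule eq_matI)
          fix a b assume a: "a < dim_row (diagm p mu)" and b: "b < dim_col (diagm p mu)"
          have a': "a < p" and b': "b < p" using a b by auto
          have "(mat_adjoint Zh * diagm n lam * Zh) $$ (a, b) = (\<Sum>i<n. cnj (Zh $$ (i, a)) * complex_of_real (lam i) * Zh $$ (i, b))"
            by (rule adjLam_idx[OF Zh Zh a' b'])
          also have "\<dots> = (\<Sum>i<n. complex_of_real (mu b) * (cnj (Zh $$ (i, a)) * Zh $$ (i, b)))"
          proof (rule sum.cong[OF refl])
            fix i assume "i \<in> {..<n}"
            then have i: "i < n" by simp
            show "cnj (Zh $$ (i, a)) * complex_of_real (lam i) * Zh $$ (i, b) = complex_of_real (mu b) * (cnj (Zh $$ (i, a)) * Zh $$ (i, b))"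
              using supp[OF i b'] by (cases "Zh $$ (i, b) = 0") auto
          qed
          also have "\<dots> = complex_of_real (mu b) * (if a = b then 1 else 0)"
            using orth_inner[OF Zh ZhZh a' b'] by (simp add: sum_distrib_left[symmetric])
          finally show "(mat_adjoint Zh * diagm n lam * Zh) $$ (a, b) = diagm p mu $$ (a, b)"
            using a' b' by simp
        qed (use Zh in auto)
        finally show "mat_adjoint (X * first_last_cols lp lm Q) * A * (X * first_last_cols lp lm Q) = diagm p (\<lambda>j. if j < lp then lam j else lam (j + n - p))"
          unfolding mu_def .
      qed
      have Wp: "(lam i < lam (lp - 1) \<longrightarrow> wp i = 1) \<and> (lam (lp - 1) < lam i \<longrightarrow> wp i = 0)"
        if lp0: "0 < lp" and i: "i < n" for i
      proof -
        have "(lam i < lam (lp - 1) \<longrightarrow> (\<Sum>j<lp. pw X i j) = 1) \<and> (lam (lp - 1) < lam i \<longrightarrow> (\<Sum>j<lp. pw X i j) = 0)"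
          by (rule pos_block(2)[where lam=lam and w=\<omega> and q=lp and n=n and p="pw X"])
             (use lam_sorted lpn pnn cs[OF X] rs_pos[OF X] dec_pos nn_pos lpk0 posEq' pos_lt lp0 i in auto)
        then show ?thesis unfolding wp_def .
      qed
      have Wm: "(lam (n - lm) < lam i \<longrightarrow> wm i = 1) \<and> (lam i < lam (n - lm) \<longrightarrow> wm i = 0)"
        if lm0: "0 < lm" and i: "i < n" for i
      proof -
        have "(lam (n - lm) < lam i \<longrightarrow> (\<Sum>t<lm. pw X i (k - lm + t)) = 1) \<and> (lam i < lam (n - lm) \<longrightarrow> (\<Sum>t<lm. pw X i (k - lm + t)) = 0)"
          by (rule neg_block(2)[where lam=lam and w="\<lambda>t. \<omega> (k - lm + t)" and q=lm and n=n and p="\<lambda>i t. pw X i (k - lm + t)"])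
             (use lam_sorted lmn pnn cs_neg[OF X] rs_neg[OF X] dec_neg np_neg negEq' neg_lt lm0 i neg_lt[of 0] in auto)
        then show ?thesis unfolding wm_def .
      qed
      have Zh_pos: "0 < wp i" if i: "i < n" and m: "m < lp" and nz: "Zh $$ (i, m) \<noteq> 0" for i m
      proof -
        have "Z $$ (i, m) \<noteq> 0" using nz Zh_idx[of i m] i m unfolding sig_def p_def by simp
        then have "0 < pw X i m" unfolding pwZ by simp
        moreover have "pw X i m \<le> wp i" unfolding wp_def by (rule member_le_sum) (use m pnn in auto)
        ultimately show ?thesis by simp
      qed
      have Zh_neg: "0 < wm i" if i: "i < n" and t: "t < lm" and nz: "Zh $$ (i, lp + t) \<noteq> 0" for i t
      proof -
        have "Z $$ (i, k - lm + t) \<noteq> 0" using nz Zh_sig[OF i t] by simp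
        then have "0 < pw X i (k - lm + t)" unfolding pwZ by simp
        moreover have "pw X i (k - lm + t) \<le> wm i" unfolding wm_def
          by (rule member_le_sum[where f="\<lambda>t. pw X i (k - lm + t)"]) (use t pnn in auto)
        ultimately show ?thesis by simp
      qed
      have full_pos: "wp i + wm i = 1" if "0 < lp" "i < n" "lam i < lam (lp - 1)" for i
        using Wp[OF that(1,2)] that(3) wle[OF that(2)] wm0[of i] by simp
      have full_neg: "wp i + wm i = 1" if "0 < lm" "i < n" "lam (n - lm) < lam i" for i
        using Wm[OF that(1,2)] that(3) wle[OF that(2)] wp0[of i] by simp
      have pres_level: "P $$ (i, j) = 0" if i: "i < n" and j: "j < n" and ne: "lam i \<noteq> lam j" for i j
      proof (cases "wp j + wm j = 1")
        case True
        then show ?thesis using Pcol[OF j i True] ne by auto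
      next
        case nfj: False
        show ?thesis
        proof (cases "wp i + wm i = 1")
          case True
          then have "P $$ (j, i) = 0" using Pcol[OF i j True] ne by auto
          then show ?thesis using Ph[OF i j] by simp
        next
          case nfi: False
          have "P $$ (i, j) = (\<Sum>m<p. Zh $$ (i, m) * cnj (Zh $$ (j, m)))" by (rule Pidx[OF i j])
          also have "\<dots> = 0"
          proof (rule sum.neutral, intro ballI)
            fix m assume "m \<in> {..<p}"
            then have m: "m < p" by simp
            show "Zh $$ (i, m) * cnj (Zh $$ (j, m)) = 0"
            proof (rule ccontr)
              assume nz: "Zh $$ (i, m) * cnj (Zh $$ (j, m)) \<noteq> 0"
              then have nzi: "Zh $$ (i, m) \<noteq> 0" and nzj: "Zh $$ (j, m) \<noteq> 0" by auto
              show False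
              proof (cases "m < lp")
                case True
                have lp0: "0 < lp" using True by simp
                have "0 < wp i" "0 < wp j" using Zh_pos[OF i True nzi] Zh_pos[OF j True nzj] .
                then have "\<not> lam (lp - 1) < lam i" "\<not> lam (lp - 1) < lam j" using Wp[OF lp0 i] Wp[OF lp0 j] by auto
                moreover have "\<not> lam i < lam (lp - 1)" "\<not> lam j < lam (lp - 1)"
                  using full_pos[OF lp0 i] full_pos[OF lp0 j] nfi nfj by auto
                ultimately show False using ne by simp
              next
                case False
                define t where "t = m - lp"
                have t: "t < lm" and mt: "m = lp + t" using False m unfolding t_def p_def by auto
                have lm0: "0 < lm" using t by simp
                have "0 < wm i" "0 < wm j" using Zh_neg[OF i t] Zh_neg[OF j t] nzi nzj mt by auto
                then have "\<not> lam i < lam (n - lm)" "\<not> lam j < lam (n - lm)" using Wm[OF lm0 i] Wm[OF lm0 j] by auto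
                moreover have "\<not> lam (n - lm) < lam i" "\<not> lam (n - lm) < lam j"
                  using full_neg[OF lm0 i] full_neg[OF lm0 j] nfi nfj by auto
                ultimately show False using ne by simp
              qed
            qed
          qed
          finally show ?thesis .
        qed
      qed
      have swp: "(\<Sum>i<n. wp i) = real lp"
      proof -
        have "(\<Sum>i<n. wp i) = (\<Sum>j<lp. \<Sum>i<n. pw X i j)" unfolding wp_def by (rule sum.swap)
        also have "\<dots> = (\<Sum>j<lp. 1)" by (rule sum.cong) (use cs[OF X] lpk0 in auto)
        finally show ?thesis by simp
      qed
      have swm: "(\<Sum>i<n. wm i) = real lm"
      proof -
        have "(\<Sum>i<n. wm i) = (\<Sum>t<lm. \<Sum>i<n. pw X i (k - lm + t))" unfolding wm_def by (rule sum.swap)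
        also have "\<dots> = (\<Sum>t<lm. 1)" by (rule sum.cong) (use cs_neg[OF X] in auto)
        finally show ?thesis by simp
      qed
      have wp1: "0 \<le> wp i \<and> wp i \<le> 1" if "i < n" for i using wp0[of i] wm0[of i] wle[OF that] by simp
      have wm1: "0 \<le> wm i \<and> wm i \<le> 1" if "i < n" for i using wp0[of i] wm0[of i] wle[OF that] by simp
      have CP: "real (card {j. j < lp \<and> lam j = c}) \<le> (\<Sum>i\<in>{i. i < n \<and> lam i = c}. wp i)" for c
      proof (cases "lp = 0")
        case True
        then show ?thesis by (simp add: sum_nonneg wp0)
      next
        case False
        then have lp0: "0 < lp" by simp
        have "real (card {j \<in> {..<lp}. lam j = c}) \<le> (\<Sum>i\<in>{i. i < n \<and> lam i = c}. wp i)"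
        proof (rule count_lemma[where g=lam and w=wp and J="{..<lp}" and cz="lam (lp - 1)" and n=n])
          show "{..<lp} \<subseteq> {..<n}" using lpn by auto
          show "\<And>i. i < n \<Longrightarrow> 0 \<le> wp i \<and> wp i \<le> 1" by (rule wp1)
          show "(\<Sum>i<n. wp i) = real (card {..<lp})" using swp by simp
          show "\<And>i. i < n \<Longrightarrow> lam i < lam (lp - 1) \<Longrightarrow> wp i = 1" using Wp[OF lp0] by blast
          show "\<And>i. i < n \<Longrightarrow> lam (lp - 1) < lam i \<Longrightarrow> wp i = 0" using Wp[OF lp0] by blast
          show "i \<in> {..<lp}" if "i < n" "lam i < lam (lp - 1)" for i
          proof (rule ccontr)
            assume "i \<notin> {..<lp}"
            then have "lp - 1 \<le> i" by simp
            then have "lam (lp - 1) \<le> lam i" using lam_sorted[of "lp - 1" i] that by auto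
            then show False using that by simp
          qed
          show "lam j \<le> lam (lp - 1)" if "j \<in> {..<lp}" for j using lam_sorted[of j "lp - 1"] that lpn by auto
        qed
        moreover have "{j \<in> {..<lp}. lam j = c} = {j. j < lp \<and> lam j = c}" by auto
        ultimately show ?thesis by simp
      qed
      have CM: "real (card {t. t < lm \<and> lam (n - lm + t) = c}) \<le> (\<Sum>i\<in>{i. i < n \<and> lam i = c}. wm i)" for c
      proof (cases "lm = 0")
        case True
        then show ?thesis by (simp add: sum_nonneg wm0)
      next
        case False
        then have lm0: "0 < lm" by simp
        have "real (card {j \<in> {n - lm..<n}. - lam j = - c}) \<le> (\<Sum>i\<in>{i. i < n \<and> - lam i = - c}. wm i)"
        proof (rule count_lemma[where g="\<lambda>i. - lam i" and w=wm and J="{n - lm..<n}" and cz="- lam (n - lm)" and n=n])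
          show "{n - lm..<n} \<subseteq> {..<n}" by auto
          show "\<And>i. i < n \<Longrightarrow> 0 \<le> wm i \<and> wm i \<le> 1" by (rule wm1)
          show "(\<Sum>i<n. wm i) = real (card {n - lm..<n})" using swm lmn by simp
          show "\<And>i. i < n \<Longrightarrow> - lam i < - lam (n - lm) \<Longrightarrow> wm i = 1" using Wm[OF lm0] by auto
          show "\<And>i. i < n \<Longrightarrow> - lam (n - lm) < - lam i \<Longrightarrow> wm i = 0" using Wm[OF lm0] by auto
          show "i \<in> {n - lm..<n}" if "i < n" "- lam i < - lam (n - lm)" for i
          proof (rule ccontr)
            assume "i \<notin> {n - lm..<n}"
            then have "lam i \<le> lam (n - lm)" using lam_sorted[of i "n - lm"] that lm0 lmn by auto
            then show False using that by simp
          qed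
          show "- lam j \<le> - lam (n - lm)" if "j \<in> {n - lm..<n}" for j using lam_sorted[of "n - lm" j] that by auto
        qed
        moreover have "{i. i < n \<and> - lam i = - c} = {i. i < n \<and> lam i = c}" by auto
        moreover have "card {t. t < lm \<and> lam (n - lm + t) = c} \<le> card {j \<in> {n - lm..<n}. - lam j = - c}"
        proof (rule card_inj_on_le[where f="\<lambda>t. n - lm + t"])
          show "inj_on (\<lambda>t. n - lm + t) {t. t < lm \<and> lam (n - lm + t) = c}" by (rule inj_onI) simp
          show "(\<lambda>t. n - lm + t) ` {t. t < lm \<and> lam (n - lm + t) = c} \<subseteq> {j \<in> {n - lm..<n}. - lam j = - c}"
          proof
            fix x assume "x \<in> (\<lambda>t. n - lm + t) ` {t. t < lm \<and> lam (n - lm + t) = c}"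
            then obtain t where t: "t < lm" "lam (n - lm + t) = c" and x: "x = n - lm + t" by blast
            have "n - lm + t < n" using t(1) lmn by linarith
            then show "x \<in> {j \<in> {n - lm..<n}. - lam j = - c}" using t x by simp
          qed
          show "finite {j \<in> {n - lm..<n}. - lam j = - c}" by simp
        qed
        ultimately show ?thesis by simp
      qed
      define Cs where "Cs = (\<lambda>j. {i. i < n \<and> lam i = mu j})"
      define idx where "idx = (\<lambda>j. if j < lp then j else j + n - p)"
      have idx: "idx j < n" "lam (idx j) = mu j" if "j < p" for j
        unfolding idx_def mu_def using that p_def lpn kn pk by auto
      have count: "real (card {j'. j' \<le> j \<and> Cs j' = Cs j}) \<le> (\<Sum>i\<in>Cs j. Re (P $$ (i, i)))" if j: "j < p" for j
      proof -
        define c where "c = mu j"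
        have sub: "{j'. j' \<le> j \<and> Cs j' = Cs j} \<subseteq> {j. j < lp \<and> lam j = c} \<union> (\<lambda>t. lp + t) ` {t. t < lm \<and> lam (n - lm + t) = c}"
        proof
          fix j' assume "j' \<in> {j'. j' \<le> j \<and> Cs j' = Cs j}"
          then have j'j: "j' \<le> j" and CC: "Cs j' = Cs j" by auto
          have j': "j' < p" using j'j j by simp
          have "idx j' \<in> Cs j'" unfolding Cs_def using idx[OF j'] by simp
          then have "idx j' \<in> Cs j" using CC by simp
          then have mj: "mu j' = c" unfolding Cs_def c_def using idx[OF j'] by simp
          show "j' \<in> {j. j < lp \<and> lam j = c} \<union> (\<lambda>t. lp + t) ` {t. t < lm \<and> lam (n - lm + t) = c}"
          proof (cases "j' < lp")
            case True then show ?thesis using mj unfolding mu_def by simp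
          next
            case False
            define t where "t = j' - lp"
            have t: "t < lm" and jt: "j' = lp + t" using False j' unfolding t_def p_def by auto
            have "lam (n - lm + t) = c" using mj mu_neg[OF t] jt by simp
            then show ?thesis using t jt by auto
          qed
        qed
        have "card {j'. j' \<le> j \<and> Cs j' = Cs j} \<le> card ({j. j < lp \<and> lam j = c} \<union> (\<lambda>t. lp + t) ` {t. t < lm \<and> lam (n - lm + t) = c})"
          by (rule card_mono[OF _ sub]) auto
        also have "\<dots> \<le> card {j. j < lp \<and> lam j = c} + card ((\<lambda>t. lp + t) ` {t. t < lm \<and> lam (n - lm + t) = c})"
          by (rule card_Un_le)
        also have "card ((\<lambda>t. lp + t) ` {t. t < lm \<and> lam (n - lm + t) = c}) \<le> card {t. t < lm \<and> lam (n - lm + t) = c}"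
          by (rule card_image_le) auto
        finally have "real (card {j'. j' \<le> j \<and> Cs j' = Cs j}) \<le> real (card {j. j < lp \<and> lam j = c}) + real (card {t. t < lm \<and> lam (n - lm + t) = c})"
          by linarith
        also have "\<dots> \<le> (\<Sum>i\<in>{i. i < n \<and> lam i = c}. wp i) + (\<Sum>i\<in>{i. i < n \<and> lam i = c}. wm i)"
          using CP[of c] CM[of c] by linarith
        also have "\<dots> = (\<Sum>i\<in>{i. i < n \<and> lam i = c}. wp i + wm i)" by (simp add: sum.distrib)
        also have "\<dots> = (\<Sum>i\<in>Cs j. Re (P $$ (i, i)))"
          unfolding Cs_def c_def by (rule sum.cong) (auto simp: Pdiag)
        finally show ?thesis .
      qed
      have "\<exists>F \<in> carrier_mat n p. (\<forall>j j'. j < p \<longrightarrow> j' < p \<longrightarrow> (\<Sum>m<n. cnj (F $$ (m, j)) * F $$ (m, j')) = (if j = j' then 1 else 0))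
          \<and> (\<forall>a j. a < n \<longrightarrow> j < p \<longrightarrow> (\<Sum>m<n. P $$ (a, m) * F $$ (m, j)) = F $$ (a, j))
          \<and> (\<forall>i j. i < n \<longrightarrow> j < p \<longrightarrow> F $$ (i, j) \<noteq> 0 \<longrightarrow> i \<in> Cs j)"
      proof (rule build[where n=n and P=P and Cs=Cs and r=p])
        show "\<And>a b. a < n \<Longrightarrow> b < n \<Longrightarrow> P $$ (a, b) = cnj (P $$ (b, a))" by (rule Ph)
        show "\<And>a b. a < n \<Longrightarrow> b < n \<Longrightarrow> (\<Sum>m<n. P $$ (a, m) * P $$ (m, b)) = P $$ (a, b)" by (rule PP)
        show "\<forall>j<p. Cs j \<subseteq> {..<n}" unfolding Cs_def by auto
        show "\<forall>c<p. \<forall>i j. i < n \<longrightarrow> j \<in> Cs c \<longrightarrow> i \<notin> Cs c \<longrightarrow> P $$ (i, j) = 0"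
          unfolding Cs_def using pres_level by auto
        show "\<forall>j<p. \<forall>j'<p. Cs j = Cs j' \<or> Cs j \<inter> Cs j' = {}" unfolding Cs_def by auto
        show "\<forall>j<p. real (card {j'. j' \<le> j \<and> Cs j' = Cs j}) \<le> (\<Sum>i\<in>Cs j. Re (P $$ (i, i)))"
          using count by auto
      qed
      then obtain W where W: "W \<in> carrier_mat n p"
        and WW: "\<And>j j'. j < p \<Longrightarrow> j' < p \<Longrightarrow> (\<Sum>m<n. cnj (W $$ (m, j)) * W $$ (m, j')) = (if j = j' then 1 else 0)"
        and PW: "\<And>a j. a < n \<Longrightarrow> j < p \<Longrightarrow> (\<Sum>m<n. P $$ (a, m) * W $$ (m, j)) = W $$ (a, j)"
        and WS: "\<And>i j. i < n \<Longrightarrow> j < p \<Longrightarrow> W $$ (i, j) \<noteq> 0 \<Longrightarrow> i \<in> Cs j"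
        by blast
      have Wa: "mat_adjoint W \<in> carrier_mat p n" using adj_carrier'[OF W] .
      have WWm: "mat_adjoint W * W = 1\<^sub>m p"
      proof (rule eq_matI)
        fix a b assume "a < dim_row (1\<^sub>m p :: cmat)" "b < dim_col (1\<^sub>m p :: cmat)"
        then have a: "a < p" and b: "b < p" by auto
        have "(mat_adjoint W * W) $$ (a, b) = (\<Sum>m<n. mat_adjoint W $$ (a, m) * W $$ (m, b))"
          using W a b by (subst mult_idx) auto
        also have "\<dots> = (\<Sum>m<n. cnj (W $$ (m, a)) * W $$ (m, b))" by (rule sum.cong) (use W a in auto)
        finally show "(mat_adjoint W * W) $$ (a, b) = 1\<^sub>m p $$ (a, b)" using WW[OF a b] a b by simp
      qed (use W in auto)
      have PWm: "P * W = W"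
      proof (rule eq_matI)
        fix a j assume "a < dim_row W" "j < dim_col W"
        then have a: "a < n" and j: "j < p" using W by auto
        have "(P * W) $$ (a, j) = (\<Sum>m<n. P $$ (a, m) * W $$ (m, j))" using PPs(1) W a j by (subst mult_idx) auto
        then show "(P * W) $$ (a, j) = W $$ (a, j)" using PW[OF a j] by simp
      qed (use PPs(1) W in auto)
      have LW: "diagm n lam * W = W * diagm p mu"
        by (rule eig_mult[OF W]) (use WS in \<open>auto simp: Cs_def\<close>)
      have Zha: "mat_adjoint Zh \<in> carrier_mat p n" using adj_carrier'[OF Zh] .
      define R where "R = mat_adjoint Zh * W"
      have Rc: "R \<in> carrier_mat p p" unfolding R_def using mult_carrier_mat[OF Zha W] .
      have Ra: "mat_adjoint R \<in> carrier_mat p p" using adj_carrier'[OF Rc] .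
      have ZhR: "Zh * R = W"
      proof -
        have "Zh * R = (Zh * mat_adjoint Zh) * W" unfolding R_def by (rule assoc_mult_mat[OF Zh Zha W, symmetric])
        then show ?thesis using PWm unfolding P_def by simp
      qed
      have RR: "mat_adjoint R * R = 1\<^sub>m p"
      proof -
        have "mat_adjoint R = mat_adjoint W * Zh" unfolding R_def using adj_mult[OF Zha W] by simp
        then have "mat_adjoint R * R = mat_adjoint W * Zh * R" by simp
        also have "\<dots> = mat_adjoint W * (Zh * R)" by (rule assoc_mult_mat[OF Wa Zh Rc])
        finally show ?thesis using ZhR WWm by simp
      qed
      have RR': "R * mat_adjoint R = 1\<^sub>m p" by (rule mat_mult_left_right_inverse[OF Ra Rc RR])
      define Qh where "Qh = first_last_cols lp lm Q"
      have XQhc: "X * Qh \<in> carrier_mat n p" unfolding Qh_def XQh using mult_carrier_mat[OF U Zh] .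
      define V where "V = X * Qh * R"
      have VW: "V = U * W"
      proof -
        have "V = U * Zh * R" unfolding V_def Qh_def XQh ..
        also have "\<dots> = U * (Zh * R)" by (rule assoc_mult_mat[OF U Zh Rc])
        finally show ?thesis using ZhR by simp
      qed
      have Vc: "V \<in> carrier_mat n p" unfolding VW using mult_carrier_mat[OF U W] .
      have VBV: "mat_adjoint V * B * V = 1\<^sub>m p" unfolding VW using adjUN_B[OF ctx W] WWm by simp
      have AV: "A * V = B * V * diagm p mu"
      proof -
        have L: "diagm n lam \<in> carrier_mat n n" by simp
        have Mu: "diagm p mu \<in> carrier_mat p p" by simp
        have UL: "U * diagm n lam \<in> carrier_mat n n" using mult_carrier_mat[OF U L] .
        have "A * V = (A * U) * W" unfolding VW by (rule assoc_mult_mat[OF Ac U W, symmetric])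
        also have "A * U = B * (U * diagm n lam)" by (rule AU[OF ctx])
        also have "B * (U * diagm n lam) * W = B * ((U * diagm n lam) * W)" by (rule assoc_mult_mat[OF Bc UL W])
        also have "(U * diagm n lam) * W = U * (diagm n lam * W)" by (rule assoc_mult_mat[OF U L W])
        also have "diagm n lam * W = W * diagm p mu" by (rule LW)
        also have "U * (W * diagm p mu) = (U * W) * diagm p mu" by (rule assoc_mult_mat[OF U W Mu, symmetric])
        also have "B * ((U * W) * diagm p mu) = (B * (U * W)) * diagm p mu"
          by (rule assoc_mult_mat[OF Bc mult_carrier_mat[OF U W] Mu, symmetric])
        finally show ?thesis unfolding VW .
      qed
      have colV: "colspace V = colspace (X * Qh)" unfolding V_def by (rule colspace_mult_unitary[OF XQhc Rc RR'])
      have B1: "pencil_eigenspace n A B p (\<lambda>j. if j < lp then lam j else lam (j + n - p)) (colspace (X * first_last_cols lp lm Q))"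
        unfolding pencil_eigenspace_def mu_def[symmetric] Qh_def[symmetric]
        using Vc VBV AV colV by blast
      show "(det D \<noteq> 0 \<longrightarrow>
              pencil_eigenspace n A B k (\<lambda>j. if j < l then lam j else lam (j + n - k))
                 (colspace (X * Q))
            \<and> ((\<forall>i<k. \<forall>j<k. i \<noteq> j \<longrightarrow> \<omega> i \<noteq> \<omega> j) \<longrightarrow>
                 mat_adjoint (X * Q) * A * (X * Q)
                   = diagm k (\<lambda>j. if j < l then lam j else lam (j + n - k))))
          \<and> (let lp = card {i. i < k \<and> 0 < \<omega> i}; lm = card {i. i < k \<and> \<omega> i < 0};
                 Qh = first_last_cols lp lm Q
             in pencil_eigenspace n A B (lp + lm)
                  (\<lambda>j. if j < lp then lam j else lam (j + n - (lp + lm))) (colspace (X * Qh))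
                \<and> ((\<forall>i<k. \<forall>j<k. i \<noteq> j \<longrightarrow> \<omega> i \<noteq> 0 \<longrightarrow> \<omega> i \<noteq> \<omega> j) \<longrightarrow>
                     mat_adjoint (X * Qh) * A * (X * Qh)
                       = diagm (lp + lm) (\<lambda>j. if j < lp then lam j else lam (j + n - (lp + lm)))))"
      proof
        show "let lp = card {i. i < k \<and> 0 < \<omega> i}; lm = card {i. i < k \<and> \<omega> i < 0};
                 Qh = first_last_cols lp lm Q
             in pencil_eigenspace n A B (lp + lm)
                  (\<lambda>j. if j < lp then lam j else lam (j + n - (lp + lm))) (colspace (X * Qh))
                \<and> ((\<forall>i<k. \<forall>j<k. i \<noteq> j \<longrightarrow> \<omega> i \<noteq> 0 \<longrightarrow> \<omega> i \<noteq> \<omega> j) \<longrightarrow>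
                     mat_adjoint (X * Qh) * A * (X * Qh)
                       = diagm (lp + lm) (\<lambda>j. if j < lp then lam j else lam (j + n - (lp + lm))))"
          unfolding Let_def lp_def[symmetric] lm_def[symmetric] p_def[symmetric] using B1 B2 by simp
      next
        show "det D \<noteq> 0 \<longrightarrow>
              pencil_eigenspace n A B k (\<lambda>j. if j < l then lam j else lam (j + n - k))
                 (colspace (X * Q))
            \<and> ((\<forall>i<k. \<forall>j<k. i \<noteq> j \<longrightarrow> \<omega> i \<noteq> \<omega> j) \<longrightarrow>
                 mat_adjoint (X * Q) * A * (X * Q)
                   = diagm k (\<lambda>j. if j < l then lam j else lam (j + n - k)))"
        proof
          assume dD: "det D \<noteq> 0"
          have nz: "\<omega> j \<noteq> 0" if "j < k" for j by (rule det_omega_nz[OF Dc Q QDQ dD that])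
          have lpe: "lp = l"
          proof -
            have "{i. i < k \<and> 0 < \<omega> i} = {..<l}"
            proof (rule Set.set_eqI)
              fix i show "i \<in> {i. i < k \<and> 0 < \<omega> i} \<longleftrightarrow> i \<in> {..<l}"
                using \<omega>_pos[of i] \<omega>_neg[of i] nz[of i] lk by (cases "i < l") auto
            qed
            then show ?thesis unfolding lp_def by simp
          qed
          have lme: "lm = k - l"
          proof -
            have "{i. i < k \<and> \<omega> i < 0} = {l..<k}"
            proof (rule Set.set_eqI)
              fix i show "i \<in> {i. i < k \<and> \<omega> i < 0} \<longleftrightarrow> i \<in> {l..<k}"
                using \<omega>_pos[of i] \<omega>_neg[of i] nz[of i] lk by (cases "i < l") auto
            qed
            then show ?thesis unfolding lm_def by simp
          qed
          have pe: "p = k" unfolding p_def using lpe lme lk by simp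
          have Qe: "first_last_cols lp lm Q = Q"
            by (rule eq_matI) (use Qc pe p_def in \<open>auto simp: flc_idx\<close>)
          have mue: "(\<lambda>j. if j < lp then lam j else lam (j + n - p)) = (\<lambda>j. if j < l then lam j else lam (j + n - k))"
            unfolding lpe pe by simp
          show "pencil_eigenspace n A B k (\<lambda>j. if j < l then lam j else lam (j + n - k)) (colspace (X * Q))
            \<and> ((\<forall>i<k. \<forall>j<k. i \<noteq> j \<longrightarrow> \<omega> i \<noteq> \<omega> j) \<longrightarrow>
                 mat_adjoint (X * Q) * A * (X * Q) = diagm k (\<lambda>j. if j < l then lam j else lam (j + n - k)))"
            using B1 B2 unfolding Qe unfolding pe lpe by auto
        qed
      qed
    qed
  qed
qed

end
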